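(* Let $f_1,\dots,f_N$ be compactly supported distributions on $\mathbb{R}$ and let $a_1,\dots,a_N$ be distinct real numbers such that \[ \sum_{j=1}^N\widehat f_j(\lambda)e^{a_j\lambda}=0\qquad\text{for all }\lambda\in\mathbb{R}. \] Then $f_1=\dots=f_N=0$.
   Context: $\widehat f_j$ denotes the Fourier transform of $f_j$ (an entire function of polynomial growth on $\mathbb{R}$, by Paley–Wiener–Schwartz). *)

theory Defs
  imports "HOL-Analysis.Analysis"
begin

fun nderiv :: "nat \<Rightarrow> (real \<Rightarrow> complex) \<Rightarrow> real \<Rightarrow> complex" where
  "nderiv 0 \<phi> = \<phi>"
| "nderiv (Suc k) \<phi> = (\<lambda>x. vector_derivative (nderiv k \<phi>) (at x))"

definition smooth :: "(real \<Rightarrow> complex) \<Rightarrow> bool" where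
  "smooth \<phi> \<longleftrightarrow> (\<forall>k x. (nderiv k \<phi> has_vector_derivative nderiv (Suc k) \<phi> x) (at x))"

text \<open>Compactly supported distributions on the real line, i.e. the dual space E'(R) of
  C-infinity(R): linear functionals on smooth functions which are continuous for the
  Frechet topology, i.e. bounded by finitely many seminorms
  sup over [-K,K] of the derivatives up to order m.\<close>
definition cs_distribution :: "((real \<Rightarrow> complex) \<Rightarrow> complex) \<Rightarrow> bool" where
  "cs_distribution T \<longleftrightarrow>
     (\<forall>\<phi> \<psi>. smooth \<phi> \<longrightarrow> smooth \<psi> \<longrightarrow> T (\<lambda>x. \<phi> x + \<psi> x) = T \<phi> + T \<psi>) \<and>
     (\<forall>\<phi> c. smooth \<phi> \<longrightarrow> T (\<lambda>x. c * \<phi> x) = c * T \<phi>) \<and>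
     (\<exists>C K m. \<forall>\<phi>. smooth \<phi> \<longrightarrow>
        norm (T \<phi>) \<le> C * (\<Sum>k\<le>m. (SUP x\<in>{-K..K}. norm (nderiv k \<phi> x))))"

definition fourier_dist :: "((real \<Rightarrow> complex) \<Rightarrow> complex) \<Rightarrow> real \<Rightarrow> complex" where
  "fourier_dist T t = T (\<lambda>x. exp (- \<i> * complex_of_real (t * x)))"

definition zero_dist :: "((real \<Rightarrow> complex) \<Rightarrow> complex) \<Rightarrow> bool" where
  "zero_dist T \<longleftrightarrow> (\<forall>\<phi>. smooth \<phi> \<longrightarrow> T \<phi> = 0)"

end

theory Submission
  imports Defs "HOL-Complex_Analysis.Complex_Analysis"
begin

lemma nderiv_family:
  assumes "\<psi> 0 = \<phi>" "\<And>k x. (\<psi> k has_vector_derivative \<psi> (Suc k) x) (at x)"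
  shows "nderiv k \<phi> = \<psi> k"
proof (induction k)
  case 0 then show ?case using assms(1) by simp
next
  case (Suc k)
  show ?case using Suc assms(2) by (auto intro!: ext vector_derivative_at)
qed

lemma smooth_family:
  assumes "\<psi> 0 = \<phi>" "\<And>k x. (\<psi> k has_vector_derivative \<psi> (Suc k) x) (at x)"
  shows "smooth \<phi>"
  unfolding smooth_def using nderiv_family[OF assms] assms(2) by simp

lemma smoothD: "smooth \<phi> \<Longrightarrow> (nderiv k \<phi> has_vector_derivative nderiv (Suc k) \<phi> x) (at x)"
  unfolding smooth_def by blast

lemma smooth_lin:
  assumes "smooth \<phi>" "smooth \<psi>"
  shows "smooth (\<lambda>x. a * \<phi> x + b * \<psi> x)"
    and "nderiv k (\<lambda>x. a * \<phi> x + b * \<psi> x) = (\<lambda>x. a * nderiv k \<phi> x + b * nderiv k \<psi> x)"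
proof -
  define F where "F = (\<lambda>k x. a * nderiv k \<phi> x + b * nderiv k \<psi> x)"
  have F0: "F 0 = (\<lambda>x. a * \<phi> x + b * \<psi> x)" by (simp add: F_def)
  have FD: "(F k has_vector_derivative F (Suc k) x) (at x)" for k x
    unfolding F_def
    by (intro has_vector_derivative_add has_vector_derivative_mult_right smoothD assms)
  show "smooth (\<lambda>x. a * \<phi> x + b * \<psi> x)" using smooth_family[OF F0 FD] .
  show "nderiv k (\<lambda>x. a * \<phi> x + b * \<psi> x) = (\<lambda>x. a * nderiv k \<phi> x + b * nderiv k \<psi> x)"
    using nderiv_family[OF F0 FD] by (simp add: F_def)
qed

definition lin :: "((real \<Rightarrow> complex) \<Rightarrow> complex) \<Rightarrow> bool" where
  "lin T \<longleftrightarrow> (\<forall>\<phi> \<psi>. smooth \<phi> \<longrightarrow> smooth \<psi> \<longrightarrow> T (\<lambda>x. \<phi> x + \<psi> x) = T \<phi> + T \<psi>) \<and>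
     (\<forall>\<phi> c. smooth \<phi> \<longrightarrow> T (\<lambda>x. c * \<phi> x) = c * T \<phi>)"

lemma smooth_scale: "smooth \<phi> \<Longrightarrow> smooth (\<lambda>x. c * \<phi> x)"
  using smooth_lin(1)[of \<phi> \<phi> c 0] by simp

lemma T_lin2:
  assumes "lin T" "smooth \<phi>" "smooth \<psi>"
  shows "T (\<lambda>x. a * \<phi> x + b * \<psi> x) = a * T \<phi> + b * T \<psi>"
  using assms smooth_scale unfolding lin_def by simp

lemma T_scale: "lin T \<Longrightarrow> smooth \<phi> \<Longrightarrow> T (\<lambda>x. c * \<phi> x) = c * T \<phi>"
  unfolding lin_def by blast

definition bnd :: "((real \<Rightarrow> complex) \<Rightarrow> complex) \<Rightarrow> real \<Rightarrow> real \<Rightarrow> nat \<Rightarrow> bool" where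
  "bnd T C K m \<longleftrightarrow> C \<ge> 0 \<and> K \<ge> 0 \<and> (\<forall>\<phi> \<epsilon>. smooth \<phi> \<longrightarrow>
      (\<forall>k\<le>m. \<forall>x\<in>{-K..K}. norm (nderiv k \<phi> x) \<le> \<epsilon>) \<longrightarrow> norm (T \<phi>) \<le> C * \<epsilon>)"

lemma bnd_mono: "bnd T C K m \<Longrightarrow> K \<le> K' \<Longrightarrow> bnd T C K' m"
  unfolding bnd_def by force

lemma bndD: "bnd T C K m \<Longrightarrow> smooth \<phi> \<Longrightarrow> (\<And>k x. k \<le> m \<Longrightarrow> x \<in> {-K..K} \<Longrightarrow> norm (nderiv k \<phi> x) \<le> \<epsilon>)
   \<Longrightarrow> norm (T \<phi>) \<le> C * \<epsilon>"
  unfolding bnd_def by blast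

lemma smooth_cont: "smooth \<phi> \<Longrightarrow> continuous_on S (nderiv k \<phi>)"
  by (meson continuous_at_imp_continuous_on has_vector_derivative_continuous smoothD)

lemma cs_lin: "cs_distribution T \<Longrightarrow> lin T"
  unfolding cs_distribution_def lin_def by blast

lemma cs_bnd:
  assumes "cs_distribution T"
  shows "\<exists>C K m. bnd T C K m"
proof -
  obtain C0 K0 m where B: "\<And>\<phi>. smooth \<phi> \<Longrightarrow>
        norm (T \<phi>) \<le> C0 * (\<Sum>k\<le>m. (SUP x\<in>{-K0..K0}. norm (nderiv k \<phi> x)))"
    using assms unfolding cs_distribution_def by blast
  have L: "lin T" using cs_lin[OF assms] .
  show ?thesis
  proof (cases "K0 < 0")
    case True
    define M where "M = C0 * (\<Sum>k\<le>m. Sup ({}::real set))"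
    have B': "norm (T \<phi>) \<le> M" if "smooth \<phi>" for \<phi>
      using B[OF that] True unfolding M_def by simp
    have Z: "T \<phi> = 0" if "smooth \<phi>" for \<phi>
    proof (rule ccontr)
      assume ne: "T \<phi> \<noteq> 0"
      define c where "c = complex_of_real ((\<bar>M\<bar> + 1) / norm (T \<phi>))"
      have "norm (T (\<lambda>x. c * \<phi> x)) \<le> M" using B'[OF smooth_scale[OF that]] .
      moreover have "norm (c * T \<phi>) = \<bar>M\<bar> + 1"
        unfolding c_def norm_mult norm_of_real using ne by simp
      moreover have "T (\<lambda>x. c * \<phi> x) = c * T \<phi>" using T_scale[OF L that] .
      ultimately have "\<bar>M\<bar> + 1 \<le> M" by simp
      then show False by linarith
    qed
    have "bnd T 0 0 0" unfolding bnd_def using Z by simp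
    then show ?thesis by blast
  next
    case False
    have "bnd T (max C0 0 * (m+1)) K0 m"
      unfolding bnd_def
    proof (intro conjI allI impI)
      fix \<phi> \<epsilon> assume sm: "smooth \<phi>" and h: "\<forall>k\<le>m. \<forall>x\<in>{-K0..K0}. norm (nderiv k \<phi> x) \<le> \<epsilon>"
      have ne: "{-K0..K0} \<noteq> {}" using False by simp
      have e0: "\<epsilon> \<ge> 0" using h ne by (meson all_not_in_conv norm_ge_zero order_trans le0)
      have bdd: "bdd_above ((\<lambda>x. norm (nderiv k \<phi> x)) ` {-K0..K0})" for k
      proof -
        have "compact ((\<lambda>x. norm (nderiv k \<phi> x)) ` {-K0..K0})"
          by (intro compact_continuous_image continuous_on_norm smooth_cont sm) simp
        then show ?thesis by (simp add: bounded_imp_bdd_above compact_imp_bounded)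
      qed
      have S1: "(SUP x\<in>{-K0..K0}. norm (nderiv k \<phi> x)) \<le> \<epsilon>" if "k \<le> m" for k
        using h that ne by (intro cSUP_least) auto
      have S0: "(SUP x\<in>{-K0..K0}. norm (nderiv k \<phi> x)) \<ge> 0" for k
        using ne bdd[of k] by (meson all_not_in_conv cSUP_upper2 norm_ge_zero)
      have sum0: "(\<Sum>k\<le>m. (SUP x\<in>{-K0..K0}. norm (nderiv k \<phi> x))) \<ge> 0"
        using S0 by (simp add: sum_nonneg)
      have sum1: "(\<Sum>k\<le>m. (SUP x\<in>{-K0..K0}. norm (nderiv k \<phi> x))) \<le> (m+1) * \<epsilon>"
        using sum_mono[of "{..m}" "\<lambda>k. (SUP x\<in>{-K0..K0}. norm (nderiv k \<phi> x))" "\<lambda>_. \<epsilon>"] S1 by simp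
      have "norm (T \<phi>) \<le> C0 * (\<Sum>k\<le>m. (SUP x\<in>{-K0..K0}. norm (nderiv k \<phi> x)))" using B[OF sm] .
      also have "\<dots> \<le> max C0 0 * (\<Sum>k\<le>m. (SUP x\<in>{-K0..K0}. norm (nderiv k \<phi> x)))"
        using sum0 by (intro mult_right_mono) auto
      also have "\<dots> \<le> max C0 0 * ((m+1) * \<epsilon>)"
        using sum1 by (intro mult_left_mono) auto
      finally show "norm (T \<phi>) \<le> max C0 0 * (m+1) * \<epsilon>" by (simp add: mult.assoc)
    qed (use False in auto)
    then show ?thesis by blast
  qed
qed

lemma T_cont:
  assumes L: "lin T" and B: "bnd T C K m" and sm: "smooth \<phi>"
    and smF: "eventually (\<lambda>h. smooth (\<Phi> h)) F"
    and U: "\<And>\<epsilon>. \<epsilon> > 0 \<Longrightarrow> eventually (\<lambda>h. \<forall>k\<le>m. \<forall>x\<in>{-K..K}. norm (nderiv k (\<Phi> h) x - nderiv k \<phi> x) \<le> \<epsilon>) F"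
  shows "((\<lambda>h. T (\<Phi> h)) \<longlongrightarrow> T \<phi>) F"
proof (rule tendstoI)
  fix e :: real assume e: "e > 0"
  have C0: "C \<ge> 0" using B unfolding bnd_def by simp
  define \<epsilon> where "\<epsilon> = e / (2 * (C + 1))"
  have \<epsilon>: "\<epsilon> > 0" using e C0 by (simp add: \<epsilon>_def)
  have "C * \<epsilon> < e"
  proof -
    have "C * \<epsilon> \<le> (C+1) * \<epsilon>" using \<epsilon> by simp
    also have "\<dots> = e / 2" using C0 by (simp add: \<epsilon>_def field_simps)
    finally show ?thesis using e by simp
  qed
  show "eventually (\<lambda>h. dist (T (\<Phi> h)) (T \<phi>) < e) F"
    using eventually_conj[OF smF U[OF \<epsilon>]]
  proof (rule eventually_mono)
    fix h assume H: "smooth (\<Phi> h) \<and> (\<forall>k\<le>m. \<forall>x\<in>{-K..K}. norm (nderiv k (\<Phi> h) x - nderiv k \<phi> x) \<le> \<epsilon>)"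
    have eq: "T (\<lambda>x. 1 * \<Phi> h x + (-1) * \<phi> x) = T (\<Phi> h) - T \<phi>"
      using T_lin2[OF L _ sm, of "\<Phi> h" 1 "-1"] H by simp
    have "norm (T (\<lambda>x. 1 * \<Phi> h x + (-1) * \<phi> x)) \<le> C * \<epsilon>"
    proof (rule bndD[OF B smooth_lin(1)[OF _ sm]])
      show "smooth (\<Phi> h)" using H by simp
      fix k x assume "k \<le> m" "x \<in> {-K..K}"
      have H': "smooth (\<Phi> h)" using H by simp
      from \<open>k \<le> m\<close> \<open>x \<in> {-K..K}\<close> show "norm (nderiv k (\<lambda>x. 1 * \<Phi> h x + (-1) * \<phi> x) x) \<le> \<epsilon>"
        unfolding smooth_lin(2)[OF H' sm] using H by simp
    qed
    then show "dist (T (\<Phi> h)) (T \<phi>) < e" using eq \<open>C * \<epsilon> < e\<close> by (simp add: dist_norm)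
  qed
qed


abbreviation bb :: "complex \<Rightarrow> real \<Rightarrow> complex" where
  "bb \<beta> x \<equiv> \<beta> - \<i> * complex_of_real x"

lemma bb_deriv: "((\<lambda>x. bb \<beta> x) has_vector_derivative (-\<i>)) (at x)"
  by (auto intro!: derivative_eq_intros)

lemma smooth_comp:
  assumes "\<And>x. bb \<beta> x \<in> U" "\<And>k z. z \<in> U \<Longrightarrow> (g k has_field_derivative g (Suc k) z) (at z)"
  shows "smooth (\<lambda>x. g 0 (bb \<beta> x))"
    and "nderiv k (\<lambda>x. g 0 (bb \<beta> x)) = (\<lambda>x. (-\<i>)^k * g k (bb \<beta> x))"
proof -
  define F where "F = (\<lambda>k x. (-\<i>)^k * g k (bb \<beta> x))"
  have F0: "F 0 = (\<lambda>x. g 0 (bb \<beta> x))" by (simp add: F_def)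
  have FD: "(F k has_vector_derivative F (Suc k) x) (at x)" for k x
  proof -
    have "((g k \<circ> (\<lambda>x. bb \<beta> x)) has_vector_derivative (-\<i>) * g (Suc k) (bb \<beta> x)) (at x)"
      by (rule field_vector_diff_chain_at[OF bb_deriv assms(2)[OF assms(1)]])
    then have "((\<lambda>x. (-\<i>)^k * g k (bb \<beta> x)) has_vector_derivative (-\<i>)^k * ((-\<i>) * g (Suc k) (bb \<beta> x))) (at x)"
      by (intro has_vector_derivative_mult_right) (simp add: o_def)
    then show ?thesis by (simp add: F_def mult_ac)
  qed
  show "smooth (\<lambda>x. g 0 (bb \<beta> x))" using smooth_family[OF F0 FD] .
  show "nderiv k (\<lambda>x. g 0 (bb \<beta> x)) = (\<lambda>x. (-\<i>)^k * g k (bb \<beta> x))"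
    using nderiv_family[OF F0 FD] by (simp add: F_def)
qed

definition psum :: "(nat \<Rightarrow> complex) \<Rightarrow> nat \<Rightarrow> complex \<Rightarrow> complex" where
  "psum c N z = (\<Sum>n<N. c n * z^n)"

lemma psum_deriv: "(psum c N has_field_derivative psum (diffs c) (N - 1) z) (at z)"
proof -
  have "(psum c N has_field_derivative (\<Sum>n<N. c n * (of_nat n * z^(n - 1)))) (at z)"
    unfolding psum_def by (auto intro!: derivative_eq_intros sum.cong simp: mult_ac)
  moreover have "(\<Sum>n<N. c n * (of_nat n * z^(n - 1))) = psum (diffs c) (N - 1) z"
  proof (cases N)
    case 0 then show ?thesis by (simp add: psum_def)
  next
    case (Suc M)
    have "(\<Sum>n<Suc M. c n * (of_nat n * z^(n - 1))) = (\<Sum>n<M. c (Suc n) * (of_nat (Suc n) * z^n))"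
      by (subst sum.lessThan_Suc_shift) simp
    then show ?thesis using Suc by (simp add: psum_def diffs_def mult_ac)
  qed
  ultimately show ?thesis by simp
qed

lemma psum_smooth:
  shows "smooth (\<lambda>x. psum c N (bb \<beta> x))"
    and "nderiv k (\<lambda>x. psum c N (bb \<beta> x)) = (\<lambda>x. (-\<i>)^k * psum ((diffs^^k) c) (N - k) (bb \<beta> x))"
proof -
  define g where "g = (\<lambda>k. psum ((diffs^^k) c) (N - k))"
  have gD: "(g k has_field_derivative g (Suc k) z) (at z)" for k z
    using psum_deriv[of "(diffs^^k) c" "N - k" z] by (simp add: g_def)
  have g0: "g 0 = psum c N" by (simp add: g_def)
  show "smooth (\<lambda>x. psum c N (bb \<beta> x))"
    using smooth_comp(1)[of \<beta> UNIV g, OF _ gD] g0 by simp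
  show "nderiv k (\<lambda>x. psum c N (bb \<beta> x)) = (\<lambda>x. (-\<i>)^k * psum ((diffs^^k) c) (N - k) (bb \<beta> x))"
    using smooth_comp(2)[of \<beta> UNIV g, OF _ gD] g0 by (simp add: g_def)
qed

lemma pow_smooth: "smooth (\<lambda>x. (bb \<beta> x)^n)"
proof -
  have "(\<lambda>x. (bb \<beta> x)^n) = (\<lambda>x. psum (\<lambda>i. if i = n then 1 else 0) (Suc n) (bb \<beta> x))"
    by (simp add: psum_def)
  then show ?thesis using psum_smooth(1) by simp
qed

lemma T_psum:
  assumes L: "lin T"
  shows "T (\<lambda>x. psum c N (bb \<beta> x)) = (\<Sum>n<N. c n * T (\<lambda>x. (bb \<beta> x)^n))"
proof (induction N)
  case 0
  have "T (\<lambda>x. 0 * (bb \<beta> x)^0) = 0 * T (\<lambda>x. (bb \<beta> x)^0)" by (rule T_scale[OF L pow_smooth])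
  then show ?case by (simp add: psum_def)
next
  case (Suc N)
  have "T (\<lambda>x. 1 * psum c N (bb \<beta> x) + c N * (bb \<beta> x)^N) =
        1 * T (\<lambda>x. psum c N (bb \<beta> x)) + c N * T (\<lambda>x. (bb \<beta> x)^N)"
    by (rule T_lin2[OF L psum_smooth(1) pow_smooth])
  then show ?case using Suc by (simp add: psum_def)
qed

lemma diffs_pow_conv:
  fixes c :: "nat \<Rightarrow> complex"
  assumes "\<And>z. norm z < r \<Longrightarrow> summable (\<lambda>n. c n * z^n)"
  shows "norm z < r \<Longrightarrow> summable (\<lambda>n. (diffs^^k) c n * z^n)"
proof (induction k arbitrary: z)
  case 0 then show ?case using assms by simp
next
  case (Suc k) show ?case using termdiff_converges[of z r "(diffs^^k) c"] Suc by simp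
qed

lemma T_series:
  assumes L: "lin T" and B: "bnd T C K m" and sm: "smooth \<phi>"
    and R: "\<And>x. x \<in> {-K..K} \<Longrightarrow> norm (bb \<beta> x) \<le> R" and Rr: "R < r"
    and conv: "\<And>z. norm z < r \<Longrightarrow> summable (\<lambda>n. c n * z^n)"
    and D: "\<And>k x. k \<le> m \<Longrightarrow> x \<in> {-K..K} \<Longrightarrow> nderiv k \<phi> x = (-\<i>)^k * (\<Sum>n. (diffs^^k) c n * (bb \<beta> x)^n)"
  shows "(\<lambda>n. c n * T (\<lambda>x. (bb \<beta> x)^n)) sums T \<phi>"
proof -
  have K0: "K \<ge> 0" using B by (simp add: bnd_def)
  have "norm (bb \<beta> 0) \<le> R" using R[of 0] K0 by simp
  then have R0: "R \<ge> 0" by (meson norm_ge_zero order_trans)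
  define R' where "R' = (R + r) / 2"
  have R'r: "norm (complex_of_real R') < r" "norm (complex_of_real R) < norm (complex_of_real R')"
    using Rr R0 unfolding norm_of_real by (auto simp: R'_def)
  have absS: "summable (\<lambda>n. norm ((diffs^^k) c n * complex_of_real R ^ n))" for k
    by (rule powser_insidea[OF diffs_pow_conv[OF conv R'r(1)] R'r(2)])
  define tl where "tl k M = (\<Sum>n. norm ((diffs^^k) c (n + M) * complex_of_real R ^ (n + M)))" for k M
  have tl0: "(\<lambda>M. tl k M) \<longlonglongrightarrow> 0" for k
    unfolding tl_def using suminf_exist_split2[OF absS[of k]] by simp
  have tail: "norm ((\<Sum>n. (diffs^^k) c n * z^n) - psum ((diffs^^k) c) M z) \<le> tl k M"
    if z: "norm z \<le> R" for k M z
  proof -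
    have sz: "summable (\<lambda>n. (diffs^^k) c n * z^n)"
      by (rule diffs_pow_conv[OF conv]) (use z Rr in auto)
    have "(\<Sum>n. (diffs^^k) c n * z^n) - psum ((diffs^^k) c) M z = (\<Sum>n. (diffs^^k) c (n+M) * z^(n+M))"
      using suminf_split_initial_segment[OF sz, of M] by (simp add: psum_def)
    also have "norm \<dots> \<le> tl k M"
      unfolding tl_def
    proof (rule norm_suminf_le)
      show "norm ((diffs^^k) c (n+M) * z^(n+M)) \<le> norm ((diffs^^k) c (n + M) * complex_of_real R ^ (n + M))" for n
        using z R0 by (auto simp: norm_mult norm_power intro!: mult_left_mono power_mono)
      show "summable (\<lambda>n. norm ((diffs^^k) c (n + M) * complex_of_real R ^ (n + M)))"
        using absS[of k] by (rule summable_ignore_initial_segment[where k = M, simplified add.commute])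
    qed
    finally show ?thesis .
  qed
  have lim: "(\<lambda>N. T (\<lambda>x. psum c N (bb \<beta> x))) \<longlonglongrightarrow> T \<phi>"
  proof (rule T_cont[OF L B sm])
    show "\<forall>\<^sub>F N in sequentially. smooth (\<lambda>x. psum c N (bb \<beta> x))" by (simp add: psum_smooth(1))
    fix \<epsilon> :: real assume e: "\<epsilon> > 0"
    have ev: "\<forall>\<^sub>F N in sequentially. tl k (N - k) < \<epsilon>" for k
    proof -
      obtain M where M: "\<And>n. n \<ge> M \<Longrightarrow> norm (tl k n - 0) < \<epsilon>" using LIMSEQ_D[OF tl0 e] by blast
      have "tl k (N - k) < \<epsilon>" if "N \<ge> M + k" for N
      proof -
        have "norm (tl k (N - k) - 0) < \<epsilon>" using M that by simp
        then show ?thesis by simp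
      qed
      then show ?thesis unfolding eventually_sequentially by blast
    qed
    have "\<forall>\<^sub>F N in sequentially. \<forall>k\<in>{..m}. tl k (N - k) < \<epsilon>"
      by (rule eventually_ball_finite) (use ev in auto)
    then show "\<forall>\<^sub>F N in sequentially. \<forall>k\<le>m. \<forall>x\<in>{-K..K}.
         norm (nderiv k (\<lambda>x. psum c N (bb \<beta> x)) x - nderiv k \<phi> x) \<le> \<epsilon>"
    proof (rule eventually_mono, intro allI impI ballI)
      fix N k x assume H: "\<forall>k\<in>{..m}. tl k (N - k) < \<epsilon>" and k: "k \<le> m" and x: "x \<in> {-K..K}"
      have alg: "\<And>a p q::complex. a*p - a*q = -(a*(q-p))" by (simp add: algebra_simps)
      have "nderiv k (\<lambda>x. psum c N (bb \<beta> x)) x - nderiv k \<phi> x =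
            - ((-\<i>)^k * ((\<Sum>n. (diffs^^k) c n * (bb \<beta> x)^n) - psum ((diffs^^k) c) (N - k) (bb \<beta> x)))"
        unfolding psum_smooth(2) D[OF k x] by (rule alg)
      also have "norm \<dots> \<le> tl k (N - k)"
        unfolding norm_minus_cancel norm_mult norm_power using tail[OF R[OF x]] by simp
      finally show "norm (nderiv k (\<lambda>x. psum c N (bb \<beta> x)) x - nderiv k \<phi> x) \<le> \<epsilon>"
        using H k by force
    qed
  qed
  then show ?thesis unfolding sums_def by (simp add: T_psum[OF L])
qed


lemma deriv_series_id:
  fixes c :: "nat \<Rightarrow> complex"
  assumes conv: "\<And>z. norm z < r \<Longrightarrow> summable (\<lambda>n. c n * z^n)"
    and gD: "\<And>k z. norm z < r \<Longrightarrow> (g k has_field_derivative g (Suc k) z) (at z)"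
    and g0: "\<And>z. norm z < r \<Longrightarrow> g 0 z = (\<Sum>n. c n * z^n)"
  shows "norm z < r \<Longrightarrow> g k z = (\<Sum>n. (diffs^^k) c n * z^n)"
proof (induction k arbitrary: z)
  case 0 then show ?case using g0 by simp
next
  case (Suc k)
  define K where "K = complex_of_real ((norm z + r) / 2)"
  have z0: "0 \<le> norm z + r" using Suc.prems norm_ge_zero[of z] by linarith
  have K: "norm z < norm K" "norm K < r" using Suc.prems z0
    unfolding K_def norm_of_real by auto
  have sK: "summable (\<lambda>n. (diffs^^k) c n * K^n)" by (rule diffs_pow_conv[OF conv K(2)])
  have D1: "DERIV (\<lambda>x. \<Sum>n. (diffs^^k) c n * x^n) z :> (\<Sum>n. diffs ((diffs^^k) c) n * z^n)"
    by (rule termdiffs_strong[OF sK K(1)])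
  have D2: "DERIV (\<lambda>x. \<Sum>n. (diffs^^k) c n * x^n) z :> g (Suc k) z"
  proof (rule has_field_derivative_transform_within_open[OF gD[OF Suc.prems], of "ball 0 r"])
    show "z \<in> ball 0 r" "open (ball 0 r)" using Suc.prems by auto
    show "\<And>x. x \<in> ball 0 r \<Longrightarrow> g k x = (\<Sum>n. (diffs ^^ k) c n * x ^ n)"
      using Suc.IH by auto
  qed
  show ?case using DERIV_unique[OF D2 D1] by simp
qed

lemma exp_family_deriv: "((\<lambda>z. t^k * exp (t * z)) has_field_derivative t^(Suc k) * exp (t * z)) (at z)"
  by (auto intro!: derivative_eq_intros simp: mult_ac)

lemma exp_series: "(\<Sum>n. (t^n / fact n) * z^n) = exp (t * (z::complex))"
proof -
  have "(\<lambda>n. (t*z)^n /\<^sub>R fact n) sums exp (t * z)" by (rule exp_converges)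
  moreover have "(\<lambda>n. (t*z)^n /\<^sub>R fact n) = (\<lambda>n. (t^n / fact n) * z^n)"
    by (rule ext) (simp add: scaleR_conv_of_real power_mult_distrib divide_inverse mult_ac)
  ultimately show ?thesis by (simp add: sums_iff)
qed

lemma exp_summable: "summable (\<lambda>n. (t^n / fact n) * (z::complex)^n)"
proof -
  have "(\<lambda>n. (t*z)^n /\<^sub>R fact n) sums exp (t * z)" by (rule exp_converges)
  moreover have "(\<lambda>n. (t*z)^n /\<^sub>R fact n) = (\<lambda>n. (t^n / fact n) * z^n)"
    by (rule ext) (simp add: scaleR_conv_of_real power_mult_distrib divide_inverse mult_ac)
  ultimately show ?thesis by (metis sums_summable)
qed

lemma T_exp:
  assumes L: "lin T" and B: "bnd T C K m"
  shows "(\<lambda>n. (t^n / fact n) * T (\<lambda>x. (bb \<beta> x)^n)) sums T (\<lambda>x. exp (t * bb \<beta> x))"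
proof -
  define g where "g = (\<lambda>k z. t^k * exp (t * z))"
  have gD: "(g k has_field_derivative g (Suc k) z) (at z)" for k z
    unfolding g_def by (rule exp_family_deriv)
  have sm: "smooth (\<lambda>x. g 0 (bb \<beta> x))" by (rule smooth_comp(1)[of \<beta> UNIV g, OF _ gD]) simp
  define R where "R = norm \<beta> + K"
  show ?thesis
  proof (rule T_series[OF L B, of _ \<beta> R "R+1"])
    show "smooth (\<lambda>x. exp (t * bb \<beta> x))" using sm by (simp add: g_def)
    show "norm (bb \<beta> x) \<le> R" if "x \<in> {-K..K}" for x
    proof -
      have "norm (bb \<beta> x) \<le> norm \<beta> + norm (\<i> * complex_of_real x)" by (rule norm_triangle_ineq4)
      also have "\<dots> \<le> R" using that by (auto simp: R_def norm_mult)
      finally show ?thesis .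
    qed
    show "R < R + 1" by simp
    show "summable (\<lambda>n. t ^ n / fact n * z ^ n)" for z by (rule exp_summable)
    fix k x assume "k \<le> m" "x \<in> {-K..K}"
    have "nderiv k (\<lambda>x. g 0 (bb \<beta> x)) x = (-\<i>)^k * g k (bb \<beta> x)"
      using smooth_comp(2)[of \<beta> UNIV g, OF _ gD] by simp
    also have "g k (bb \<beta> x) = (\<Sum>n. (diffs^^k) (\<lambda>n. t^n / fact n) n * (bb \<beta> x)^n)"
    proof (rule deriv_series_id[of "norm (bb \<beta> x) + 1" "\<lambda>n. t^n / fact n" g])
      show "summable (\<lambda>n. t^n / fact n * z ^ n)" for z by (rule exp_summable)
      show "(g k has_field_derivative g (Suc k) z) (at z)" for k z by (rule gD)
      show "g 0 z = (\<Sum>n. t^n / fact n * z ^ n)" for z unfolding g_def exp_series by simp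
    qed simp
    finally show "nderiv k (\<lambda>x. exp (t * bb \<beta> x)) x =
        (-\<i>)^k * (\<Sum>n. (diffs^^k) (\<lambda>n. t^n / fact n) n * (bb \<beta> x)^n)"
      by (simp add: g_def)
  qed
qed

definition geo :: "complex \<Rightarrow> nat \<Rightarrow> complex \<Rightarrow> complex" where
  "geo w k z = fact k * inverse ((w - z)^(Suc k))"

lemma geo_deriv: "z \<noteq> w \<Longrightarrow> (geo w k has_field_derivative geo w (Suc k) z) (at z)"
  unfolding geo_def
  apply (rule derivative_eq_intros refl | simp)+
  done

lemma geo_series:
  assumes "norm z < norm w"
  shows "(\<lambda>n. (1 / w^(Suc n)) * z^n) sums geo w 0 z"
proof -
  have w0: "w \<noteq> 0" using assms by auto
  have "norm (z / w) < 1" using assms w0 by (simp add: norm_divide)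
  then have "(\<lambda>n. (z/w)^n) sums (1 / (1 - z/w))" by (rule geometric_sums)
  then have "(\<lambda>n. (1/w) * (z/w)^n) sums ((1/w) * (1 / (1 - z/w)))" by (rule sums_mult)
  moreover have "(\<lambda>n. (1/w) * (z/w)^n) = (\<lambda>n. (1 / w^(Suc n)) * z^n)"
    by (auto simp: power_divide)
  moreover have "(1/w) * (1 / (1 - z/w)) = geo w 0 z"
    using w0 assms by (auto simp: geo_def field_simps)
  ultimately show ?thesis by simp
qed

lemma T_geo:
  assumes L: "lin T" and B: "bnd T C K m"
    and R: "\<And>x. x \<in> {-K..K} \<Longrightarrow> norm (bb \<beta> x) \<le> R" and Rw: "R < norm w"
    and nw: "\<And>x. bb \<beta> x \<noteq> w"
  shows "(\<lambda>n. (1 / w^(Suc n)) * T (\<lambda>x. (bb \<beta> x)^n)) sums T (\<lambda>x. 1 / (w - bb \<beta> x))"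
proof -
  have gD: "(geo w k has_field_derivative geo w (Suc k) z) (at z)" if "z \<in> -{w}" for k z
    using geo_deriv that by auto
  have sm: "smooth (\<lambda>x. geo w 0 (bb \<beta> x))"
    by (rule smooth_comp(1)[of \<beta> "-{w}" "geo w", OF _ gD]) (use nw in auto)
  have eqf: "(\<lambda>x. geo w 0 (bb \<beta> x)) = (\<lambda>x. 1 / (w - bb \<beta> x))"
    by (auto simp: geo_def divide_inverse)
  show ?thesis
  proof (rule T_series[OF L B _ R Rw])
    show "smooth (\<lambda>x. 1 / (w - bb \<beta> x))" using sm eqf by simp
    show "summable (\<lambda>n. 1 / w ^ Suc n * z ^ n)" if "norm z < norm w" for z
      using geo_series[OF that] by (rule sums_summable)
    fix k x assume "k \<le> m" "x \<in> {-K..K}"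
    have "nderiv k (\<lambda>x. geo w 0 (bb \<beta> x)) x = (-\<i>)^k * geo w k (bb \<beta> x)"
      using smooth_comp(2)[of \<beta> "-{w}" "geo w", OF _ gD] nw by simp
    also have "geo w k (bb \<beta> x) = (\<Sum>n. (diffs^^k) (\<lambda>n. 1 / w^(Suc n)) n * (bb \<beta> x)^n)"
    proof (rule deriv_series_id[of "norm w" "\<lambda>n. 1 / w^(Suc n)" "geo w"])
      show "summable (\<lambda>n. 1 / w ^ Suc n * z ^ n)" if "norm z < norm w" for z
        using geo_series[OF that] by (rule sums_summable)
      show "(geo w k has_field_derivative geo w (Suc k) z) (at z)" if "norm z < norm w" for k z
        by (rule geo_deriv) (use that in auto)
      show "geo w 0 z = (\<Sum>n. 1 / w ^ Suc n * z ^ n)" if "norm z < norm w" for z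
        using geo_series[OF that] by (simp add: sums_iff)
      show "norm (bb \<beta> x) < norm w" using R[OF \<open>x \<in> {-K..K}\<close>] Rw by simp
    qed
    finally show "nderiv k (\<lambda>x. 1 / (w - bb \<beta> x)) x =
        (-\<i>)^k * (\<Sum>n. (diffs^^k) (\<lambda>n. 1 / w^(Suc n)) n * (bb \<beta> x)^n)"
      by (simp add: eqf)
  qed
qed


lemma geo_smooth:
  assumes "\<And>x. bb \<beta> x \<noteq> w"
  shows "smooth (\<lambda>x. geo w j (bb \<beta> x))"
    and "nderiv k (\<lambda>x. geo w j (bb \<beta> x)) = (\<lambda>x. (-\<i>)^k * geo w (j + k) (bb \<beta> x))"
proof -
  have gD: "((\<lambda>k. geo w (j + k)) k has_field_derivative (\<lambda>k. geo w (j + k)) (Suc k) z) (at z)"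
    if "z \<in> -{w}" for k z
    using geo_deriv[of z w "j + k"] that by simp
  show "smooth (\<lambda>x. geo w j (bb \<beta> x))"
    using smooth_comp(1)[of \<beta> "-{w}" "\<lambda>k. geo w (j + k)", OF _ gD] assms by simp
  show "nderiv k (\<lambda>x. geo w j (bb \<beta> x)) = (\<lambda>x. (-\<i>)^k * geo w (j + k) (bb \<beta> x))"
    using smooth_comp(2)[of \<beta> "-{w}" "\<lambda>k. geo w (j + k)", OF _ gD] assms by simp
qed

lemma geo_eq: "geo w 0 z = 1 / (w - z)"
  by (simp add: geo_def divide_inverse)

lemma bb0_ne: "Re w \<noteq> 0 \<Longrightarrow> bb 0 x \<noteq> w"
  by auto

lemma norm_geo: "norm (geo w k z) = fact k / norm (w - z)^(Suc k)"
  by (simp add: geo_def norm_mult norm_inverse norm_power divide_inverse)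

lemma geo_le:
  assumes "\<rho> > 0" "norm (w - z) \<ge> \<rho>"
  shows "norm (geo w k z) \<le> fact k / \<rho>^(Suc k)"
proof -
  have h: "\<rho>^(Suc k) \<le> norm (w - z)^(Suc k)" by (rule power_mono) (use assms in auto)
  have n: "norm (w - z) > 0" using assms by linarith
  have p: "0 < norm (w - z)^(Suc k) * \<rho>^(Suc k)" using assms n by simp
  show ?thesis unfolding norm_geo by (rule divide_left_mono[OF h _ p]) simp
qed

definition V :: "((real \<Rightarrow> complex) \<Rightarrow> complex) \<Rightarrow> complex \<Rightarrow> complex" where
  "V T w = T (\<lambda>x. geo w 0 (bb 0 x))"

lemma V_bound:
  assumes B: "bnd T C K m" and w: "Re w \<noteq> 0" and \<rho>: "\<rho> > 0"
    and d: "\<And>x. x \<in> {-K..K} \<Longrightarrow> norm (w - bb 0 x) \<ge> \<rho>"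
  shows "norm (V T w) \<le> C * (\<Sum>k\<le>m. fact k / \<rho>^(Suc k))"
  unfolding V_def
proof (rule bndD[OF B geo_smooth(1)])
  show "bb 0 x \<noteq> w" for x using w by auto
  fix k x assume k: "k \<le> m" and x: "x \<in> {-K..K}"
  have "norm (nderiv k (\<lambda>x. geo w 0 (bb 0 x)) x) = norm (geo w k (bb 0 x))"
    unfolding geo_smooth(2)[OF bb0_ne[OF w]] by (simp add: norm_mult norm_power)
  also have "\<dots> \<le> fact k / \<rho>^(Suc k)" by (rule geo_le[OF \<rho> d[OF x]])
  also have "\<dots> \<le> (\<Sum>k\<le>m. fact k / \<rho>^(Suc k))"
    by (rule member_le_sum) (use k \<rho> in auto)
  finally show "norm (nderiv k (\<lambda>x. geo w 0 (bb 0 x)) x) \<le> (\<Sum>k\<le>m. fact k / \<rho>^(Suc k))" .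
qed

lemma smooth_zero: "smooth (\<lambda>x. 0)" and nderiv_zero: "nderiv k (\<lambda>x. 0) = (\<lambda>x. 0)"
proof -
  have F: "(\<lambda>k x. 0::complex) 0 = (\<lambda>x. 0)" by simp
  have FD: "((\<lambda>k x. 0::complex) k has_vector_derivative (\<lambda>k x. 0::complex) (Suc k) x) (at x)" for k x
    by (simp add: has_vector_derivative_const)
  show "smooth (\<lambda>x. 0)" using smooth_family[OF F FD] .
  show "nderiv k (\<lambda>x. 0) = (\<lambda>x. 0)" using nderiv_family[OF F FD] by simp
qed

lemma T_zero: "lin T \<Longrightarrow> T (\<lambda>x. 0) = 0"
  using T_scale[OF _ smooth_zero, of T 0] by simp

lemma aux_pow: "((u::complex)^(Suc k))^Suc (Suc 0) = u^k * u^(Suc (Suc k))"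
proof -
  have "((u::complex)^(Suc k))^Suc (Suc 0) = u^(Suc k * Suc (Suc 0))" by (simp only: power_mult)
  also have "Suc k * Suc (Suc 0) = k + Suc (Suc k)" by simp
  finally show ?thesis by (simp add: power_add)
qed
lemma aux_eq: assumes "(u::complex) \<noteq> 0"
  shows "fact k * - ((of_nat (Suc k) * u^k) * inverse ((u^(Suc k))^Suc (Suc 0))) = - (fact (Suc k) * inverse (u^(Suc (Suc k))))"
  unfolding aux_pow using assms by (simp add: field_simps)

lemma geo_deriv_w:
  assumes "y \<noteq> z"
  shows "((\<lambda>w. geo w k z) has_field_derivative - geo y (Suc k) z) (at y within S)"
proof -
  have yz: "y - z \<noteq> 0" using assms by simp
  have d1: "((\<lambda>w. (w - z)^(Suc k)) has_field_derivative (of_nat (Suc k) * (y - z)^k)) (at y within S)"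
    by (rule derivative_eq_intros refl)+ simp
  have d2: "((\<lambda>w. inverse ((w - z)^(Suc k))) has_field_derivative
     - ((of_nat (Suc k) * (y - z)^k) * inverse (((y - z)^(Suc k))^Suc (Suc 0)))) (at y within S)"
    by (rule DERIV_inverse_fun[OF d1]) (use yz in simp)
  have d3: "((\<lambda>w. fact k * inverse ((w - z)^(Suc k))) has_field_derivative
     fact k * - ((of_nat (Suc k) * (y - z)^k) * inverse (((y - z)^(Suc k))^Suc (Suc 0)))) (at y within S)"
    by (rule DERIV_cmult[OF d2])
  have eq: "fact k * - ((of_nat (Suc k) * (y - z)^k) * inverse (((y - z)^(Suc k))^Suc (Suc 0)))
      = - geo y (Suc k) z"
    using aux_eq[OF yz, of k] by (simp add: geo_def)
  show ?thesis using d3 unfolding eq geo_def[symmetric] by (simp add: geo_def)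
qed

lemma geo_taylor:
  assumes w0: "Re w0 \<noteq> 0" and z: "Re z = 0" and y: "y \<in> ball w0 (\<bar>Re w0\<bar> / 2)" and yw: "y \<noteq> w0"
  shows "norm ((geo y k z - geo w0 k z) / (y - w0) + geo w0 (Suc k) z)
         \<le> fact (Suc (Suc k)) / (\<bar>Re w0\<bar> / 2)^(Suc (Suc (Suc k))) * norm (y - w0)"
proof -
  note False = yw
  define d where "d = \<bar>Re w0\<bar> / 2"
  have d0: "d > 0" using w0 by (simp add: d_def)
  define S where "S = ball w0 d"
  have Sd: "norm (u - z) \<ge> d" if "u \<in> S" for u
  proof -
    have "\<bar>Re u - Re w0\<bar> < d" using that unfolding S_def
      by (metis abs_Re_le_cmod dist_commute dist_complex_def mem_ball minus_complex.sel(1) order.strict_trans1)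
    then have "\<bar>Re u\<bar> \<ge> d" unfolding d_def by linarith
    also have "\<bar>Re u\<bar> = \<bar>Re (u - z)\<bar>" using z by simp
    also have "\<dots> \<le> norm (u - z)" by (rule abs_Re_le_cmod)
    finally show ?thesis .
  qed
  have Sz: "u \<noteq> z" if "u \<in> S" for u using Sd[OF that] d0 by auto
  define f where "f = (\<lambda>(i::nat) u. if i = 0 then geo u k z else if i = 1 then - geo u (Suc k) z
                                 else geo u (Suc (Suc k)) z)"
  have fD: "(f i has_field_derivative f (Suc i) u) (at u within S)" if "u \<in> S" "i \<le> 1" for i u
  proof (cases "i = 0")
    case True then show ?thesis using geo_deriv_w[OF Sz[OF that(1)]] by (simp add: f_def)
  next
    case False
    then have i1: "i = 1" using that by simp
    have "((\<lambda>w. - geo w (Suc k) z) has_field_derivative - (- geo u (Suc (Suc k)) z)) (at u within S)"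
      by (intro DERIV_minus geo_deriv_w Sz that)
    then show ?thesis using i1 by (simp add: f_def)
  qed
  have fB: "norm (f (Suc 1) u) \<le> fact (Suc (Suc k)) / d^(Suc (Suc (Suc k)))" if "u \<in> S" for u
    using geo_le[OF d0 Sd[OF that], of "Suc (Suc k)"] by (simp add: f_def)
  have w0S: "w0 \<in> S" using d0 by (simp add: S_def)
  have yS: "y \<in> S" using y by (simp add: S_def d_def)
  have T: "norm (f 0 y - (\<Sum>i\<le>1. f i w0 * (y - w0)^i / fact i))
     \<le> fact (Suc (Suc k)) / d^(Suc (Suc (Suc k))) * norm (y - w0)^(Suc 1) / fact 1"
    by (rule complex_Taylor[of S 1 f]) (use fD fB w0S yS in \<open>auto simp: S_def\<close>)
  have eq: "f 0 y - (\<Sum>i\<le>1. f i w0 * (y - w0)^i / fact i) =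
      (y - w0) * ((geo y k z - geo w0 k z) / (y - w0) + geo w0 (Suc k) z)"
    using False by (simp add: f_def field_simps)
  have "norm (y - w0) * norm ((geo y k z - geo w0 k z) / (y - w0) + geo w0 (Suc k) z)
      \<le> norm (y - w0) * (fact (Suc (Suc k)) / d^(Suc (Suc (Suc k))) * norm (y - w0))"
    using T unfolding eq norm_mult by (simp add: power2_eq_square mult_ac)
  note ineq = this
  have np: "0 < norm (y - w0)" using False by simp
  have "norm ((geo y k z - geo w0 k z) / (y - w0) + geo w0 (Suc k) z)
      \<le> fact (Suc (Suc k)) / d^(Suc (Suc (Suc k))) * norm (y - w0)"
    using mult_left_le_imp_le[OF ineq np] .
  then show ?thesis unfolding d_def .
qed


lemma aux5: "1 * (1/h * (a*p) + -(1/h) * (a*q)) + 1 * (a*r) = a * ((p - q)/h + r)" for a p q r h :: complex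
  by (simp add: diff_divide_distrib ring_distribs mult_ac)

lemma V_deriv:
  assumes L: "lin T" and B: "bnd T C K m" and w0: "Re w0 \<noteq> 0"
  shows "(V T has_field_derivative - T (\<lambda>x. geo w0 1 (bb 0 x))) (at w0)"
proof -
  define d where "d = \<bar>Re w0\<bar> / 2"
  have d0: "d > 0" using w0 by (simp add: d_def)
  define g1 where "g1 = (\<lambda>x. geo w0 1 (bb 0 x))"
  have sg1: "smooth g1" unfolding g1_def by (rule geo_smooth(1)) (use w0 in auto)
  have sg0: "smooth (\<lambda>x. geo w0 0 (bb 0 x))" by (rule geo_smooth(1)) (use w0 in auto)
  define \<Phi> where "\<Phi> y = (\<lambda>x. (1/(y-w0)) * geo y 0 (bb 0 x) + (-(1/(y-w0))) * geo w0 0 (bb 0 x))" for y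
  define \<Psi> where "\<Psi> y = (\<lambda>x. 1 * \<Phi> y x + 1 * g1 x)" for y
  have Rey: "Re y \<noteq> 0" if "y \<in> ball w0 d" for y
  proof -
    have "\<bar>Re y - Re w0\<bar> < d" using that
      by (metis abs_Re_le_cmod dist_commute dist_complex_def mem_ball minus_complex.sel(1) order.strict_trans1)
    then show ?thesis unfolding d_def by auto
  qed
  have smy: "smooth (\<lambda>x. geo y 0 (bb 0 x))" if "Re y \<noteq> 0" for y
    by (rule geo_smooth(1)) (use that in auto)
  have smPhi: "smooth (\<Phi> y)" if "Re y \<noteq> 0" for y
    unfolding \<Phi>_def by (rule smooth_lin(1)[OF smy[OF that] sg0])
  have smPsi: "smooth (\<Psi> y)" if "Re y \<noteq> 0" for y
    unfolding \<Psi>_def by (rule smooth_lin(1)[OF smPhi[OF that] sg1])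
  have TPsi: "T (\<Psi> y) = (V T y - V T w0) / (y - w0) + T g1" if "Re y \<noteq> 0" for y
  proof -
    have "T (\<Psi> y) = 1 * T (\<Phi> y) + 1 * T g1"
      unfolding \<Psi>_def by (rule T_lin2[OF L smPhi[OF that] sg1])
    moreover have "T (\<Phi> y) = (1/(y-w0)) * V T y + (-(1/(y-w0))) * V T w0"
      unfolding \<Phi>_def V_def by (rule T_lin2[OF L smy[OF that] sg0])
    ultimately show ?thesis by (simp add: diff_divide_distrib)
  qed
  have ndPsi: "nderiv k (\<Psi> y) x = (-\<i>)^k * ((geo y k (bb 0 x) - geo w0 k (bb 0 x)) / (y - w0) + geo w0 (Suc k) (bb 0 x))"
    if ry: "Re y \<noteq> 0" for y k x
  proof -
    have "nderiv k (\<Psi> y) x = 1 * nderiv k (\<Phi> y) x + 1 * nderiv k g1 x"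
      unfolding \<Psi>_def smooth_lin(2)[OF smPhi[OF that] sg1] ..
    also have "nderiv k (\<Phi> y) x = (1/(y-w0)) * nderiv k (\<lambda>x. geo y 0 (bb 0 x)) x
                + (-(1/(y-w0))) * nderiv k (\<lambda>x. geo w0 0 (bb 0 x)) x"
      unfolding \<Phi>_def smooth_lin(2)[OF smy[OF that] sg0] ..
    also have "nderiv k (\<lambda>x. geo y 0 (bb 0 x)) x = (-\<i>)^k * geo y k (bb 0 x)"
    proof -
      have nb: "\<And>x. bb 0 x \<noteq> y" using bb0_ne[OF ry] .
      show ?thesis using geo_smooth(2)[OF nb, where j=0 and k=k] by simp
    qed
    also have "nderiv k (\<lambda>x. geo w0 0 (bb 0 x)) x = (-\<i>)^k * geo w0 k (bb 0 x)"
      using geo_smooth(2)[OF bb0_ne[OF w0], where j=0 and k=k] by simp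
    also have "nderiv k g1 x = (-\<i>)^k * geo w0 (Suc k) (bb 0 x)"
      unfolding g1_def using geo_smooth(2)[OF bb0_ne[OF w0], where j=1 and k=k] by simp
    finally show ?thesis by (simp only: aux5)
  qed
  define M where "M = (\<Sum>k\<le>m. fact (Suc (Suc k)) / d^(Suc (Suc (Suc k))))"
  have M0: "M \<ge> 0" unfolding M_def using d0 by (intro sum_nonneg) auto
  have lim0: "((\<lambda>y. T (\<Psi> y)) \<longlongrightarrow> T (\<lambda>x. 0)) (at w0)"
  proof (rule T_cont[OF L B smooth_zero])
    show "\<forall>\<^sub>F y in at w0. smooth (\<Psi> y)"
      unfolding eventually_at using d0 Rey smPsi by (auto intro!: exI[of _ d] simp: dist_commute)
    fix \<epsilon> :: real assume e: "\<epsilon> > 0"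
    define \<delta> where "\<delta> = min d (\<epsilon> / (M + 1))"
    have \<delta>: "\<delta> > 0" using d0 e M0 by (simp add: \<delta>_def)
    show "\<forall>\<^sub>F y in at w0. \<forall>k\<le>m. \<forall>x\<in>{-K..K}. norm (nderiv k (\<Psi> y) x - nderiv k (\<lambda>x. 0) x) \<le> \<epsilon>"
      unfolding eventually_at
    proof (rule exI[of _ \<delta>], intro conjI \<delta> ballI impI allI)
      fix y k x assume yy: "y \<noteq> w0 \<and> dist y w0 < \<delta>" and k: "k \<le> m" and x: "x \<in> {-K..K}"
      have yb: "y \<in> ball w0 d" using yy by (simp add: \<delta>_def dist_commute)
      have "norm (nderiv k (\<Psi> y) x - nderiv k (\<lambda>x. 0) x)
          = norm ((geo y k (bb 0 x) - geo w0 k (bb 0 x)) / (y - w0) + geo w0 (Suc k) (bb 0 x))"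
        unfolding nderiv_zero ndPsi[OF Rey[OF yb]] by (simp add: norm_mult norm_power)
      also have "\<dots> \<le> fact (Suc (Suc k)) / d^(Suc (Suc (Suc k))) * norm (y - w0)"
        unfolding d_def by (rule geo_taylor) (use w0 yb yy in \<open>auto simp: d_def\<close>)
      also have "\<dots> \<le> M * norm (y - w0)"
        unfolding M_def by (intro mult_right_mono member_le_sum) (use k d0 in auto)
      also have "\<dots> \<le> M * (\<epsilon> / (M + 1))"
        using yy M0 by (intro mult_left_mono) (auto simp: \<delta>_def dist_norm)
      also have "\<dots> \<le> \<epsilon>" using M0 e by (simp add: field_simps)
      finally show "norm (nderiv k (\<Psi> y) x - nderiv k (\<lambda>x. 0) x) \<le> \<epsilon>" .
    qed
  qed
  then have lim1: "((\<lambda>y. T (\<Psi> y) - T g1) \<longlongrightarrow> 0 - T g1) (at w0)"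
    unfolding T_zero[OF L] by (intro tendsto_diff tendsto_const)
  have ev: "\<forall>\<^sub>F y in at w0. T (\<Psi> y) - T g1 = (V T y - V T w0) / (y - w0)"
    unfolding eventually_at using d0 Rey TPsi by (auto intro!: exI[of _ d] simp: dist_commute)
  have "((\<lambda>y. (V T y - V T w0) / (y - w0)) \<longlongrightarrow> - T g1) (at w0)"
    using Lim_transform_eventually[OF lim1 ev] by simp
  then show ?thesis unfolding has_field_derivative_iff g1_def by simp
qed

lemma V_holo:
  assumes "lin T" "bnd T C K m"
  shows "V T holomorphic_on {w. Re w \<noteq> 0}"
  unfolding holomorphic_on_def field_differentiable_def
  using V_deriv[OF assms] by (blast intro: has_field_derivative_at_within)


lemma powser_unique_aux:
  fixes c :: "nat \<Rightarrow> complex"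
  assumes e: "\<epsilon> > 0" and S: "\<And>x. 0 < x \<Longrightarrow> x < \<epsilon> \<Longrightarrow> (\<lambda>n. c n * complex_of_real x ^ n) sums 0"
  shows "c 0 = 0"
proof -
  define x0 where "x0 = complex_of_real (\<epsilon>/2)"
  have sx0: "summable (\<lambda>n. c n * x0^n)" unfolding x0_def using S[of "\<epsilon>/2"] e sums_summable by auto
  have nx0: "norm (0::complex) < norm x0" using e by (simp add: x0_def)
  have ic: "isCont (\<lambda>x. \<Sum>n. c n * x^n) 0" by (rule isCont_powser[OF sx0 nx0])
  define s where "s k = complex_of_real (\<epsilon> / (real k + 3))" for k
  have s0: "s \<longlonglongrightarrow> 0"
  proof -
    have "(\<lambda>k. \<epsilon> / (real k + 3)) \<longlonglongrightarrow> 0" by real_asymp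
    then show ?thesis unfolding s_def by (metis of_real_0 tendsto_of_real)
  qed
  have "(\<lambda>k. \<Sum>n. c n * s k ^ n) \<longlonglongrightarrow> (\<Sum>n. c n * 0 ^ n)"
    by (rule isCont_tendsto_compose[OF ic s0])
  moreover have "(\<Sum>n. c n * s k ^ n) = 0" for k
  proof -
    have "0 < \<epsilon> / (real k + 3)" "\<epsilon> / (real k + 3) < \<epsilon>" using e by (auto simp: field_simps intro!: add_nonneg_pos)
    then have "(\<lambda>n. c n * complex_of_real (\<epsilon> / (real k + 3)) ^ n) sums 0" by (rule S)
    then show ?thesis unfolding s_def by (simp add: sums_iff)
  qed
  ultimately have "(\<lambda>k. 0) \<longlonglongrightarrow> c 0" by simp
  then show ?thesis using LIMSEQ_const_iff by metis
qed

lemma powser_unique: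
  fixes c :: "nat \<Rightarrow> complex"
  assumes e: "\<epsilon> > 0" and S: "\<And>x. 0 < x \<Longrightarrow> x < \<epsilon> \<Longrightarrow> (\<lambda>n. c n * complex_of_real x ^ n) sums 0"
  shows "c n = 0"
  using S
proof (induction n arbitrary: c)
  case 0 then show ?case using powser_unique_aux[OF e] by blast
next
  case (Suc n)
  have c0: "c 0 = 0" using powser_unique_aux[OF e Suc.prems] by blast
  have "(\<lambda>k. c (Suc k) * complex_of_real x ^ k) sums 0" if x: "0 < x" "x < \<epsilon>" for x
  proof -
    have "(\<lambda>k. c k * complex_of_real x ^ k) sums 0" using Suc.prems x by blast
    then have "(\<lambda>k. c (Suc k) * complex_of_real x ^ (Suc k)) sums 0"
      using sums_Suc_iff[of "\<lambda>k. c k * complex_of_real x ^ k" 0] c0 by simp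
    then have "(\<lambda>k. (c (Suc k) * complex_of_real x ^ (Suc k)) * inverse (complex_of_real x)) sums (0 * inverse (complex_of_real x))"
      by (rule sums_mult2)
    then show ?thesis using x by (simp add: field_simps)
  qed
  then show ?case using Suc.IH[of "\<lambda>k. c (Suc k)"] by simp
qed


lemma nderiv_Suc_shift: "nderiv (Suc k) f = nderiv k (nderiv 1 f)"
proof (induction k)
  case 0 then show ?case by simp
next
  case (Suc k)
  have "nderiv (Suc (Suc k)) f = (\<lambda>x. vector_derivative (nderiv (Suc k) f) (at x))" by simp
  also have "\<dots> = (\<lambda>x. vector_derivative (nderiv k (nderiv 1 f)) (at x))" using Suc by simp
  also have "\<dots> = nderiv (Suc k) (nderiv 1 f)" by simp
  finally show ?case .
qed

lemma smooth_comp_real: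
  assumes "\<And>k z. (g k has_field_derivative g (Suc k) z) (at z)"
  shows "smooth (\<lambda>x. g 0 (complex_of_real x))"
    and "nderiv k (\<lambda>x. g 0 (complex_of_real x)) = (\<lambda>x. g k (complex_of_real x))"
proof -
  define F where "F = (\<lambda>k x. g k (complex_of_real x))"
  have F0: "F 0 = (\<lambda>x. g 0 (complex_of_real x))" by (simp add: F_def)
  have ofr: "((\<lambda>x. complex_of_real x) has_vector_derivative 1) (at x)" for x
    by (auto intro!: derivative_eq_intros)
  have FD: "(F k has_vector_derivative F (Suc k) x) (at x)" for k x
    using field_vector_diff_chain_at[OF ofr assms] by (simp add: F_def o_def)
  show "smooth (\<lambda>x. g 0 (complex_of_real x))" using smooth_family[OF F0 FD] .
  show "nderiv k (\<lambda>x. g 0 (complex_of_real x)) = (\<lambda>x. g k (complex_of_real x))"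
    using nderiv_family[OF F0 FD] by (simp add: F_def)
qed

definition ispoly :: "(real \<Rightarrow> complex) \<Rightarrow> bool" where
  "ispoly Q \<longleftrightarrow> (\<exists>c N. Q = (\<lambda>x. psum c N (complex_of_real x)))"

lemma psum_nderiv:
  shows "smooth (\<lambda>x. psum c N (complex_of_real x))"
    and "nderiv k (\<lambda>x. psum c N (complex_of_real x)) = (\<lambda>x. psum ((diffs^^k) c) (N - k) (complex_of_real x))"
proof -
  define g where "g = (\<lambda>k. psum ((diffs^^k) c) (N - k))"
  have gD: "(g k has_field_derivative g (Suc k) z) (at z)" for k z
    using psum_deriv[of "(diffs^^k) c" "N - k" z] by (simp add: g_def)
  show "smooth (\<lambda>x. psum c N (complex_of_real x))"
    using smooth_comp_real(1)[of g, OF gD] by (simp add: g_def)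
  show "nderiv k (\<lambda>x. psum c N (complex_of_real x)) = (\<lambda>x. psum ((diffs^^k) c) (N - k) (complex_of_real x))"
    using smooth_comp_real(2)[of g, OF gD] by (simp add: g_def)
qed

lemma ispoly_smooth: "ispoly Q \<Longrightarrow> smooth Q"
  unfolding ispoly_def using psum_nderiv(1) by blast

lemma ispoly_nderiv: "ispoly Q \<Longrightarrow> ispoly (nderiv k Q)"
  unfolding ispoly_def using psum_nderiv(2) by blast

lemma psum_ofreal_bb: "psum c N (complex_of_real x) = psum (\<lambda>n. c n * \<i>^n) N (bb 0 x)"
proof -
  have e: "\<i>^n * (bb 0 x)^n = complex_of_real x ^ n" for n
    by (simp add: power_mult_distrib[symmetric])
  show ?thesis unfolding psum_def by (simp only: mult.assoc e)
qed

lemma ofreal_pow_smooth: "smooth (\<lambda>x. complex_of_real x ^ n)"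
proof -
  have "(\<lambda>x. complex_of_real x ^ n) = (\<lambda>x. psum (\<lambda>i. if i = n then 1 else 0) (Suc n) (complex_of_real x))"
    by (simp add: psum_def)
  then show ?thesis using psum_nderiv(1) by simp
qed

lemma T_ispoly:
  assumes L: "lin T" and Z: "\<And>n. T (\<lambda>x. complex_of_real x ^ n) = 0" and Q: "ispoly Q"
  shows "T Q = 0"
proof -
  obtain c N where Q: "Q = (\<lambda>x. psum c N (complex_of_real x))" using Q unfolding ispoly_def by blast
  have Tb: "T (\<lambda>x. (bb 0 x)^n) = 0" for n
  proof -
    have "(\<lambda>x. (bb 0 x)^n) = (\<lambda>x. (-\<i>)^n * complex_of_real x ^ n)"
      by (rule ext) (metis diff_0 mult_minus_left power_mult_distrib)
    moreover have "T (\<lambda>x. (-\<i>)^n * complex_of_real x ^ n) = (-\<i>)^n * T (\<lambda>x. complex_of_real x ^ n)"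
      by (rule T_scale[OF L ofreal_pow_smooth])
    ultimately show ?thesis using Z by simp
  qed
  have "T Q = T (\<lambda>x. psum (\<lambda>n. c n * \<i>^n) N (bb 0 x))" unfolding Q psum_ofreal_bb ..
  also have "\<dots> = 0" unfolding T_psum[OF L] Tb by simp
  finally show ?thesis .
qed

lemma ispoly_antideriv:
  assumes "ispoly Q"
  shows "\<exists>Q'. ispoly Q' \<and> nderiv 1 Q' = Q \<and> Q' 0 = v"
proof -
  obtain c N where Q: "Q = (\<lambda>x. psum c N (complex_of_real x))" using assms unfolding ispoly_def by blast
  define c' where "c' n = (if n = 0 then v else c (n - 1) / of_nat n)" for n
  have dc: "diffs c' = c"
  proof (rule ext)
    fix n
    have "(of_nat (Suc n)::complex) \<noteq> 0" using of_nat_eq_0_iff by blast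
    then show "diffs c' n = c n" unfolding diffs_def c'_def by simp
  qed
  define Q' where "Q' = (\<lambda>x. psum c' (Suc N) (complex_of_real x))"
  have "ispoly Q'" unfolding ispoly_def Q'_def by blast
  moreover have "nderiv 1 Q' = Q" unfolding Q'_def psum_nderiv(2) Q by (simp add: dc)
  moreover have "Q' 0 = v"
    unfolding Q'_def psum_def by (simp add: lessThan_Suc_atMost[symmetric] sum.lessThan_Suc_shift c'_def del: sum.lessThan_Suc)
  ultimately show ?thesis by blast
qed

lemma ispoly_add: "ispoly P \<Longrightarrow> ispoly Q \<Longrightarrow> ispoly (\<lambda>x. P x + Q x)"
proof -
  assume "ispoly P" "ispoly Q"
  then obtain c N d M where P: "P = (\<lambda>x. psum c N (complex_of_real x))" and Q: "Q = (\<lambda>x. psum d M (complex_of_real x))"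
    unfolding ispoly_def by blast
  define c0 where "c0 n = (if n < N then c n else 0)" for n
  define d0 where "d0 n = (if n < M then d n else 0)" for n
  have pad: "psum e A z = psum (\<lambda>n. if n < A then e n else 0) (A + B) z" for e A B z
    unfolding psum_def by (induction B) auto
  have "(\<lambda>x. P x + Q x) = (\<lambda>x. psum (\<lambda>n. c0 n + d0 n) (N + M) (complex_of_real x))"
  proof
    fix x
    have "P x = psum c0 (N + M) (complex_of_real x)" unfolding P c0_def by (rule pad)
    moreover have "Q x = psum d0 (N + M) (complex_of_real x)" unfolding Q d0_def using pad[where e=d and A=M and B=N] by (simp add: add.commute)
    ultimately show "P x + Q x = psum (\<lambda>n. c0 n + d0 n) (N + M) (complex_of_real x)"
      by (simp add: psum_def sum.distrib distrib_right)
  qed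
  then show ?thesis unfolding ispoly_def by blast
qed

lemma ispoly_scale: "ispoly P \<Longrightarrow> ispoly (\<lambda>x. a * P x)"
proof -
  assume "ispoly P"
  then obtain c N where P: "P = (\<lambda>x. psum c N (complex_of_real x))" unfolding ispoly_def by blast
  have "(\<lambda>x. a * P x) = (\<lambda>x. psum (\<lambda>n. a * c n) N (complex_of_real x))"
    unfolding P psum_def by (simp add: sum_distrib_left mult_ac)
  then show ?thesis unfolding ispoly_def by blast
qed

lemma ispoly_real: "ispoly (\<lambda>x. complex_of_real (\<Sum>i\<le>n. a i * x^i))"
proof -
  have "(\<lambda>x. complex_of_real (\<Sum>i\<le>n. a i * x^i)) = (\<lambda>x. psum (\<lambda>i. complex_of_real (a i)) (Suc n) (complex_of_real x))"
    unfolding psum_def lessThan_Suc_atMost by simp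
  then show ?thesis unfolding ispoly_def by blast
qed

lemma polyfun_ispoly:
  fixes g :: "real \<Rightarrow> complex"
  assumes "polynomial_function g"
  shows "ispoly g"
proof -
  have H: "\<forall>b\<in>Basis. real_polynomial_function (\<lambda>x. inner (g x) b)"
    using assms unfolding polynomial_function_iff_Basis_inner by blast
  have "real_polynomial_function (\<lambda>x. inner (g x) 1)" "real_polynomial_function (\<lambda>x. inner (g x) \<i>)"
    using H complex_Basis_1 complex_Basis_i by blast+
  then have "real_polynomial_function (\<lambda>x. Re (g x))" "real_polynomial_function (\<lambda>x. Im (g x))" by auto
  then obtain a n b k where A: "(\<lambda>x. Re (g x)) = (\<lambda>x. \<Sum>i\<le>n. a i * x^i)"
      and B: "(\<lambda>x. Im (g x)) = (\<lambda>x. \<Sum>i\<le>k. b i * x^i)"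
    unfolding real_polynomial_function_iff_sum by blast
  have "g = (\<lambda>x. complex_of_real (Re (g x)) + \<i> * complex_of_real (Im (g x)))"
    by (rule ext) (simp add: complex_eq_iff)
  also have "\<dots> = (\<lambda>x. complex_of_real (\<Sum>i\<le>n. a i * x^i) + \<i> * complex_of_real (\<Sum>i\<le>k. b i * x^i))"
    using A B by (metis (no_types))
  finally have geq: "g = (\<lambda>x. complex_of_real (\<Sum>i\<le>n. a i * x^i) + \<i> * complex_of_real (\<Sum>i\<le>k. b i * x^i))" .
  show ?thesis unfolding geq by (intro ispoly_add ispoly_scale ispoly_real)
qed

lemma ispoly_approx:
  assumes "continuous_on {-K..K} D" "\<eta> > 0"
  shows "\<exists>Q. ispoly Q \<and> (\<forall>x\<in>{-K..K}. norm (D x - Q x) \<le> \<eta>)"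
proof -
  obtain g where "polynomial_function g" "\<forall>x\<in>{-K..K}. norm (D x - g x) < \<eta>"
    using Stone_Weierstrass_polynomial_function[OF compact_Icc assms(1) assms(2)] by blast
  then show ?thesis using polyfun_ispoly less_imp_le by blast
qed

lemma poly_approx_claim:
  assumes B: "bnd T C K m" and sm: "smooth \<phi>"
  shows "j \<le> m \<Longrightarrow> \<eta> > 0 \<Longrightarrow> \<exists>Q. ispoly Q \<and> (\<forall>k\<le>j. \<forall>x\<in>{-K..K}. norm (nderiv (m - j + k) \<phi> x - nderiv k Q x) \<le> \<eta>)"
proof (induction j arbitrary: \<eta>)
  case 0
  obtain Q where "ispoly Q" "\<forall>x\<in>{-K..K}. norm (nderiv m \<phi> x - Q x) \<le> \<eta>"
    using ispoly_approx[OF smooth_cont[OF sm] 0(2)] by blast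
  then show ?case by auto
next
  case (Suc j)
  have K0: "K \<ge> 0" using B by (simp add: bnd_def)
  define \<eta>' where "\<eta>' = \<eta> / (3 * (K + 1))"
  have \<eta>': "\<eta>' > 0" using Suc.prems K0 by (simp add: \<eta>'_def)
  obtain Q where Q: "ispoly Q" and QA: "\<forall>k\<le>j. \<forall>x\<in>{-K..K}. norm (nderiv (m - j + k) \<phi> x - nderiv k Q x) \<le> \<eta>'"
    using Suc.IH[OF _ \<eta>'] Suc.prems by auto
  obtain Q' where Q': "ispoly Q'" "nderiv 1 Q' = Q" "Q' 0 = nderiv (m - Suc j) \<phi> 0"
    using ispoly_antideriv[OF Q] by blast
  have smQ': "smooth Q'" by (rule ispoly_smooth[OF Q'(1)])
  have mj: "Suc (m - Suc j) = m - j" using Suc.prems by simp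
  have "\<forall>k\<le>Suc j. \<forall>x\<in>{-K..K}. norm (nderiv (m - Suc j + k) \<phi> x - nderiv k Q' x) \<le> \<eta>"
  proof (intro allI impI ballI)
    fix k x assume k: "k \<le> Suc j" and x: "x \<in> {-K..K}"
    show "norm (nderiv (m - Suc j + k) \<phi> x - nderiv k Q' x) \<le> \<eta>"
    proof (cases k)
      case (Suc k')
      have e1: "nderiv k Q' = nderiv k' Q" unfolding Suc nderiv_Suc_shift Q'(2) ..
      have e2: "m - Suc j + k = m - j + k'" using Suc Suc.prems by simp
      have le: "\<eta>' \<le> \<eta>" using Suc.prems K0 by (simp add: \<eta>'_def field_simps)
      have "k' \<le> j" using Suc k by simp
      then have a: "norm (nderiv (m - j + k') \<phi> x - nderiv k' Q x) \<le> \<eta>'" using QA x by blast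
      show ?thesis unfolding e1 e2 using a le by linarith
    next
      case 0
      define h where "h = (\<lambda>x. nderiv (m - Suc j) \<phi> x - Q' x)"
      define h' where "h' = (\<lambda>x. nderiv (m - j) \<phi> x - Q x)"
      have hd: "(h has_vector_derivative h' y) (at y within {-K..K})" for y
      proof -
        have "(nderiv (m - Suc j) \<phi> has_vector_derivative nderiv (m - j) \<phi> y) (at y)"
          using smoothD[OF sm, of "m - Suc j" y] mj by simp
        moreover have "(Q' has_vector_derivative Q y) (at y)"
        proof -
          have d0: "(nderiv 0 Q' has_vector_derivative nderiv (Suc 0) Q' y) (at y)" by (rule smoothD[OF smQ'])
          have "nderiv (Suc 0) Q' = Q" using Q'(2) by (simp only: One_nat_def)
          then show ?thesis using d0 by (simp only: nderiv.simps(1))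
        qed
        ultimately have "((\<lambda>x. nderiv (m - Suc j) \<phi> x - Q' x) has_vector_derivative (nderiv (m - j) \<phi> y - Q y)) (at y)"
          by (rule has_vector_derivative_diff)
        then show ?thesis unfolding h_def h'_def by (rule has_vector_derivative_at_within)
      qed
      have h'b: "norm (h' y) \<le> \<eta>'" if yK: "y \<in> {-K..K}" for y
      proof -
        have "norm (nderiv (m - j + 0) \<phi> y - nderiv 0 Q y) \<le> \<eta>'" using QA yK by blast
        then show ?thesis unfolding h'_def by simp
      qed
      have z0: "(0::real) \<in> {-K..K}" using K0 by simp
      have seg: "closed_segment 0 x \<subseteq> {-K..K}"
        using x z0 by (simp add: closed_segment_eq_real_ivl)
      have lin: "norm (h x - h 0 - (x - 0) *\<^sub>R h' 0) \<le> norm (x - 0) * (2 * \<eta>')"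
      proof (rule vector_differentiable_bound_linearization[OF hd seg _ z0])
        fix y assume "y \<in> {-K..K}"
        have "norm (h' y - h' 0) \<le> norm (h' y) + norm (h' 0)" by (rule norm_triangle_ineq4)
        then show "norm (h' y - h' 0) \<le> 2 * \<eta>'" using h'b[OF \<open>y \<in> {-K..K}\<close>] h'b[OF z0] by simp
      qed
      have h0: "h 0 = 0" unfolding h_def using Q'(3) by simp
      have "norm (h x) \<le> norm (h x - h 0 - (x - 0) *\<^sub>R h' 0) + norm ((x - 0) *\<^sub>R h' 0)"
        using h0 norm_triangle_ineq[of "h x - h 0 - (x - 0) *\<^sub>R h' 0" "(x - 0) *\<^sub>R h' 0"] by simp
      also have "\<dots> \<le> \<bar>x\<bar> * (2 * \<eta>') + \<bar>x\<bar> * \<eta>'"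
        using lin h'b[OF z0] by (intro add_mono) (auto intro: mult_left_mono)
      also have "\<dots> = \<bar>x\<bar> * (3 * \<eta>')" by simp
      also have "\<dots> \<le> (K + 1) * (3 * \<eta>')" using x \<eta>' by (intro mult_right_mono) auto
      also have "\<dots> = \<eta>" using K0 by (simp add: \<eta>'_def field_simps)
      finally show ?thesis unfolding h_def \<open>k = 0\<close> by simp
    qed
  qed
  then show ?case using Q'(1) by blast
qed

lemma poly_kill:
  assumes L: "lin T" and B: "bnd T C K m" and Z: "\<And>n. T (\<lambda>x. complex_of_real x ^ n) = 0"
    and sm: "smooth \<phi>"
  shows "T \<phi> = 0"
proof -
  have C0: "C \<ge> 0" using B by (simp add: bnd_def)
  have le: "norm (T \<phi>) \<le> C * \<eta>" if \<eta>: "\<eta> > 0" for \<eta>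
  proof -
    obtain Q where Q: "ispoly Q" and A: "\<forall>k\<le>m. \<forall>x\<in>{-K..K}. norm (nderiv k \<phi> x - nderiv k Q x) \<le> \<eta>"
      using poly_approx_claim[OF B sm order.refl \<eta>] by auto
    have sQ: "smooth Q" by (rule ispoly_smooth[OF Q])
    have "T (\<lambda>x. 1 * \<phi> x + (-1) * Q x) = 1 * T \<phi> + (-1) * T Q" by (rule T_lin2[OF L sm sQ])
    then have eq: "T (\<lambda>x. 1 * \<phi> x + (-1) * Q x) = T \<phi>" using T_ispoly[OF L Z Q] by simp
    have "norm (T (\<lambda>x. 1 * \<phi> x + (-1) * Q x)) \<le> C * \<eta>"
    proof (rule bndD[OF B smooth_lin(1)[OF sm sQ]])
      fix k x assume "k \<le> m" "x \<in> {-K..K}"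
      then show "norm (nderiv k (\<lambda>x. 1 * \<phi> x + (-1) * Q x) x) \<le> \<eta>"
        unfolding smooth_lin(2)[OF sm sQ] using A by simp
    qed
    then show ?thesis using eq by simp
  qed
  show ?thesis
  proof (rule ccontr)
    assume ne: "T \<phi> \<noteq> 0"
    define \<eta> where "\<eta> = norm (T \<phi>) / (2 * (C + 1))"
    have "\<eta> > 0" using ne C0 by (simp add: \<eta>_def)
    then have "norm (T \<phi>) \<le> C * \<eta>" by (rule le)
    also have "C * \<eta> < norm (T \<phi>)"
    proof -
      have "C * \<eta> \<le> (C + 1) * \<eta>" using \<open>\<eta> > 0\<close> by simp
      also have "\<dots> = norm (T \<phi>) / 2" using C0 by (simp add: \<eta>_def field_simps)
      finally have "C * \<eta> \<le> norm (T \<phi>) / 2" .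
      moreover have "norm (T \<phi>) > 0" using ne by simp
      ultimately show ?thesis by linarith
    qed
    finally show False by simp
  qed
qed


lemma glue:
  fixes F G :: "complex \<Rightarrow> complex"
  assumes \<delta>: "\<delta> > 0"
    and HF: "F holomorphic_on {w. Re w \<noteq> 0}"
    and HG: "G holomorphic_on {w. Re w > -\<delta>}"
    and EQ: "\<And>w. norm w > R1 \<Longrightarrow> -\<delta> < Re w \<Longrightarrow> Re w \<noteq> 0 \<Longrightarrow> F w = G w"
    and BF: "\<And>w. Re w < 0 \<Longrightarrow> norm w \<ge> K1 \<Longrightarrow> norm (F w) \<le> M1"
    and BG: "\<And>w. Re w \<ge> 0 \<Longrightarrow> norm (G w) \<le> M2"
    and DEC: "\<And>\<epsilon>. \<epsilon> > 0 \<Longrightarrow> \<exists>x::real. x > 0 \<and> norm (F (complex_of_real x)) < \<epsilon>"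
  shows "\<And>x::real. x > 0 \<Longrightarrow> F (complex_of_real x) = 0"
proof -
  define S1 where "S1 = {w. -\<delta> < Re w} \<inter> {w. Re w < 0}"
  define s1 where "s1 = S1 \<inter> {w. Im w > \<bar>R1\<bar>}"
  have oS1: "open S1" unfolding S1_def by (intro open_Int open_halfspace_Re_gt open_halfspace_Re_lt)
  have os1: "open s1" unfolding s1_def using oS1 by (intro open_Int open_halfspace_Im_gt)
  have cS1: "connected S1" unfolding S1_def
    by (intro convex_connected convex_Int convex_halfspace_Re_gt convex_halfspace_Re_lt)
  have ne1: "s1 \<noteq> {}"
  proof -
    have "Complex (-\<delta>/2) (\<bar>R1\<bar> + 1) \<in> s1" using \<delta> by (simp add: s1_def S1_def)
    then show ?thesis by blast
  qed
  have HF1: "F holomorphic_on S1" by (rule holomorphic_on_subset[OF HF]) (auto simp: S1_def)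
  have HG1: "G holomorphic_on S1" by (rule holomorphic_on_subset[OF HG]) (auto simp: S1_def)
  have eq1: "F w = G w" if "w \<in> S1" for w
  proof (rule analytic_continuation_open[OF os1 oS1 ne1 cS1 _ HF1 HG1 _ that])
    show "s1 \<subseteq> S1" by (auto simp: s1_def)
    fix z assume z: "z \<in> s1"
    have "norm z \<ge> \<bar>Im z\<bar>" by (rule abs_Im_le_cmod)
    then have "norm z > R1" using z by (auto simp: s1_def)
    then show "F z = G z" using z by (intro EQ) (auto simp: s1_def S1_def)
  qed
  define S2 where "S2 = {w. Re w > 0}"
  define s2 where "s2 = {w. Re w > \<bar>R1\<bar>}"
  have oS2: "open S2" unfolding S2_def by (rule open_halfspace_Re_gt)
  have os2: "open s2" unfolding s2_def by (rule open_halfspace_Re_gt)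
  have cS2: "connected S2" unfolding S2_def by (intro convex_connected convex_halfspace_Re_gt)
  have ne2: "s2 \<noteq> {}"
  proof -
    have "complex_of_real (\<bar>R1\<bar> + 1) \<in> s2" by (simp add: s2_def)
    then show ?thesis by blast
  qed
  have HF2: "F holomorphic_on S2" by (rule holomorphic_on_subset[OF HF]) (auto simp: S2_def)
  have HG2: "G holomorphic_on S2" by (rule holomorphic_on_subset[OF HG]) (use \<delta> in \<open>auto simp: S2_def\<close>)
  have eq2: "F w = G w" if "w \<in> S2" for w
  proof (rule analytic_continuation_open[OF os2 oS2 ne2 cS2 _ HF2 HG2 _ that])
    show "s2 \<subseteq> S2" by (auto simp: s2_def S2_def)
    fix z assume z: "z \<in> s2"
    have "norm z \<ge> \<bar>Re z\<bar>" by (rule abs_Re_le_cmod)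
    then have "norm z > R1" using z by (auto simp: s2_def)
    then show "F z = G z" using z \<delta> by (intro EQ) (auto simp: s2_def)
  qed
  define A where "A = {w. Re w < -\<delta>/2}"
  define B where "B = {w. Re w > -\<delta>}"
  define E where "E = (\<lambda>z. if z \<in> A then F z else G z)"
  have HE0: "E holomorphic_on (A \<union> B)"
    unfolding E_def
  proof (rule holomorphic_on_If_Un)
    show "F holomorphic_on A" by (rule holomorphic_on_subset[OF HF]) (use \<delta> in \<open>auto simp: A_def\<close>)
    show "G holomorphic_on B" using HG by (simp add: B_def)
    show "open A" unfolding A_def by (rule open_halfspace_Re_lt)
    show "open B" unfolding B_def by (rule open_halfspace_Re_gt)
    show "F z = G z" if "z \<in> A" "z \<in> B" for z
      using that \<delta> by (intro eq1) (auto simp: A_def B_def S1_def)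
  qed
  have AB: "A \<union> B = UNIV" using \<delta> by (auto simp: A_def B_def)
  have HE: "E holomorphic_on UNIV" using HE0 AB by simp
  have ER: "E w = F w" if "Re w > 0" for w
  proof -
    have "w \<notin> A" using that \<delta> by (auto simp: A_def)
    then show ?thesis using eq2[of w] that by (simp add: E_def S2_def)
  qed
  have EL: "E w = F w" if "Re w < 0" for w
  proof (cases "w \<in> A")
    case True then show ?thesis by (simp add: E_def)
  next
    case False
    then have "w \<in> S1" using that \<delta> by (auto simp: A_def S1_def)
    then show ?thesis using False eq1 by (simp add: E_def)
  qed
  have E0: "E w = G w" if "Re w \<ge> 0" for w
  proof -
    have "w \<notin> A" using that \<delta> by (auto simp: A_def)
    then show ?thesis by (simp add: E_def)
  qed
  have "bounded (E ` cball 0 \<bar>K1\<bar>)"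
    by (intro compact_imp_bounded compact_continuous_image holomorphic_on_imp_continuous_on
              holomorphic_on_subset[OF HE]) auto
  then obtain B3 where B3: "\<And>w. w \<in> cball 0 \<bar>K1\<bar> \<Longrightarrow> norm (E w) \<le> B3"
    unfolding bounded_iff by blast
  have bE: "norm (E w) \<le> \<bar>M1\<bar> + \<bar>M2\<bar> + \<bar>B3\<bar>" for w
  proof (cases "Re w \<ge> 0")
    case True then show ?thesis using BG[OF True] E0[OF True] by simp
  next
    case False
    then have Rl: "Re w < 0" by simp
    show ?thesis
    proof (cases "norm w \<ge> K1")
      case True then show ?thesis using BF[OF Rl True] EL[OF Rl] by simp
    next
      case False
      then have "w \<in> cball 0 \<bar>K1\<bar>" by simp
      then show ?thesis using B3 by force
    qed
  qed
  have "bounded (range E)" unfolding bounded_iff using bE by blast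
  then have "E constant_on UNIV" by (rule Liouville_theorem[OF HE])
  then obtain c where c: "\<And>w. E w = c" unfolding constant_on_def by blast
  have c0: "c = 0"
  proof (rule ccontr)
    assume "c \<noteq> 0"
    then have "norm c > 0" by simp
    then obtain x :: real where x: "x > 0" "norm (F (complex_of_real x)) < norm c" using DEC by blast
    have "F (complex_of_real x) = c" using ER[of "complex_of_real x"] x c by simp
    then show False using x by simp
  qed
  fix x :: real assume "x > 0"
  then show "F (complex_of_real x) = 0" using ER[of "complex_of_real x"] c c0 by simp
qed


lemma exp_smooth: "smooth (\<lambda>x. exp (t * bb \<beta> x))"
proof -
  define g where "g = (\<lambda>k z. t^k * exp (t * z))"
  have gD: "(g k has_field_derivative g (Suc k) z) (at z)" for k z
    unfolding g_def by (rule exp_family_deriv)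
  have "smooth (\<lambda>x. g 0 (bb \<beta> x))" by (rule smooth_comp(1)[of \<beta> UNIV g, OF _ gD]) simp
  then show ?thesis by (simp add: g_def)
qed

lemma fourier_smooth: "smooth (\<lambda>x. exp (- \<i> * complex_of_real (t * x)))"
proof -
  have eq: "(\<lambda>x. exp (- \<i> * complex_of_real (t * x))) = (\<lambda>x. exp (complex_of_real t * bb 0 x))"
    by (rule ext) (simp add: algebra_simps)
  show ?thesis unfolding eq by (rule exp_smooth)
qed

lemma fourier_link:
  assumes L: "lin T"
  shows "T (\<lambda>x. exp (complex_of_real t * bb (complex_of_real a) x)) = fourier_dist T t * complex_of_real (exp (a * t))"
proof -
  have "(\<lambda>x. exp (complex_of_real t * bb (complex_of_real a) x)) =
        (\<lambda>x. complex_of_real (exp (a * t)) * exp (- \<i> * complex_of_real (t * x)))"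
  proof (rule ext)
    fix x
    have "complex_of_real t * bb (complex_of_real a) x = complex_of_real (a * t) + (- \<i> * complex_of_real (t * x))"
      by (simp add: algebra_simps)
    then show "exp (complex_of_real t * bb (complex_of_real a) x) =
        complex_of_real (exp (a * t)) * exp (- \<i> * complex_of_real (t * x))"
      by (simp only: exp_add exp_of_real)
  qed
  then have "T (\<lambda>x. exp (complex_of_real t * bb (complex_of_real a) x)) =
      complex_of_real (exp (a * t)) * T (\<lambda>x. exp (- \<i> * complex_of_real (t * x)))"
    using T_scale[OF L fourier_smooth[of t], of "complex_of_real (exp (a * t))"] by simp
  then show ?thesis unfolding fourier_dist_def by (simp only: mult.commute)
qed

lemma bnd_mono3:
  assumes "bnd T C K m" "C \<le> C'" "K \<le> K'" "m \<le> m'"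
  shows "bnd T C' K' m'"
  unfolding bnd_def
proof (intro conjI allI impI)
  have B: "C \<ge> 0" "K \<ge> 0" using assms(1) by (auto simp: bnd_def)
  then show "C' \<ge> 0" "K' \<ge> 0" using assms by auto
  fix \<phi> \<epsilon> assume sm: "smooth \<phi>" and h: "\<forall>k\<le>m'. \<forall>x\<in>{-K'..K'}. norm (nderiv k \<phi> x) \<le> \<epsilon>"
  have e0: "\<epsilon> \<ge> 0" using h[rule_format, of 0 0] B assms by (meson norm_ge_zero order_trans le0 atLeastAtMost_iff neg_le_0_iff_le)
  have "norm (T \<phi>) \<le> C * \<epsilon>"
    by (rule bndD[OF assms(1) sm]) (use h assms in auto)
  also have "\<dots> \<le> C' * \<epsilon>" using e0 assms by (intro mult_right_mono) auto
  finally show "norm (T \<phi>) \<le> C' * \<epsilon>" .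
qed

lemma bnd_common:
  assumes "finite I" "\<And>j. j \<in> I \<Longrightarrow> \<exists>C K m. bnd (f j) C K m"
  shows "\<exists>C K m. \<forall>j\<in>I. bnd (f j) C K m"
  using assms
proof (induction I rule: finite_induct)
  case empty then show ?case by simp
next
  case (insert i I)
  obtain C K m where IH: "\<forall>j\<in>I. bnd (f j) C K m" using insert by auto
  obtain C1 K1 m1 where b1: "bnd (f i) C1 K1 m1" using insert.prems[of i] by auto
  have "\<forall>j\<in>insert i I. bnd (f j) (max C C1) (max K K1) (max m m1)"
    using IH b1 by (auto intro: bnd_mono3)
  then show ?case by blast
qed

lemma norm_bb_le: "norm (bb \<beta> x) \<le> norm \<beta> + \<bar>x\<bar>"
proof -
  have "norm (bb \<beta> x) \<le> norm \<beta> + norm (\<i> * complex_of_real x)" by (rule norm_triangle_ineq4)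
  then show ?thesis by (simp add: norm_mult)
qed

lemma norm_ge_Re_diff: "Re (bb 0 x) = 0" by simp


lemma top_vanish:
  fixes f :: "nat \<Rightarrow> ((real \<Rightarrow> complex) \<Rightarrow> complex)" and a :: "nat \<Rightarrow> real"
  assumes fin: "finite I" and jN: "jN \<in> I"
    and L: "\<And>j. j \<in> I \<Longrightarrow> lin (f j)"
    and B: "\<And>j. j \<in> I \<Longrightarrow> bnd (f j) C K m"
    and lt: "\<And>j. j \<in> I \<Longrightarrow> j \<noteq> jN \<Longrightarrow> a j < a jN"
    and rel: "\<And>t. (\<Sum>j\<in>I. fourier_dist (f j) t * complex_of_real (exp (a j * t))) = 0"
    and sm: "smooth \<phi>"
  shows "f jN \<phi> = 0"
proof -
  have K0: "K \<ge> 0" and C0: "C \<ge> 0" using B[OF jN] by (auto simp: bnd_def)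
  define d where "d j n = f j (\<lambda>x. (bb (complex_of_real (a j)) x)^n)" for j n
  have dsum: "(\<Sum>j\<in>I. d j n) = 0" for n
  proof -
    have S: "(\<lambda>n. (\<Sum>j\<in>I. d j n) / fact n * complex_of_real t ^ n) sums 0" for t :: real
    proof -
      have "(\<lambda>n. \<Sum>j\<in>I. (complex_of_real t ^ n / fact n) * d j n) sums
            (\<Sum>j\<in>I. f j (\<lambda>x. exp (complex_of_real t * bb (complex_of_real (a j)) x)))"
        unfolding d_def by (rule sums_sum) (rule T_exp[OF L B])
      moreover have "(\<Sum>j\<in>I. f j (\<lambda>x. exp (complex_of_real t * bb (complex_of_real (a j)) x))) = 0"
        using rel[of t] by (simp add: fourier_link[OF L])
      moreover have "(\<lambda>n. \<Sum>j\<in>I. (complex_of_real t ^ n / fact n) * d j n) =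
                     (\<lambda>n. (\<Sum>j\<in>I. d j n) / fact n * complex_of_real t ^ n)"
        by (rule ext) (subst sum_distrib_left[symmetric], simp add: field_simps)
      ultimately show ?thesis by simp
    qed
    have "(\<Sum>j\<in>I. d j n) / fact n = 0"
      by (rule powser_unique[of 1]) (use S in auto)
    then show ?thesis by simp
  qed
  define R0 where "R0 = (\<Sum>j\<in>I. \<bar>a j\<bar>) + K"
  have Vrel: "(\<Sum>j\<in>I. V (f j) (w - complex_of_real (a j))) = 0"
    if w: "norm w > R0" "\<And>j. j \<in> I \<Longrightarrow> Re w \<noteq> a j" for w
  proof -
    have each: "(\<lambda>n. (1 / w^(Suc n)) * d j n) sums V (f j) (w - complex_of_real (a j))" if j: "j \<in> I" for j
    proof -
      have Rj: "norm (bb (complex_of_real (a j)) x) \<le> R0" if "x \<in> {-K..K}" for x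
      proof -
        have "norm (bb (complex_of_real (a j)) x) \<le> \<bar>a j\<bar> + \<bar>x\<bar>"
          using norm_bb_le[of "complex_of_real (a j)" x] by (simp only: norm_of_real)
        also have "\<dots> \<le> (\<Sum>j\<in>I. \<bar>a j\<bar>) + K"
          using that member_le_sum[OF j, of "\<lambda>j. \<bar>a j\<bar>"] fin by (intro add_mono) auto
        finally show ?thesis unfolding R0_def .
      qed
      have nw: "bb (complex_of_real (a j)) x \<noteq> w" for x
        using w(2)[OF j] by (auto simp: complex_eq_iff)
      have "(\<lambda>n. (1 / w^(Suc n)) * d j n) sums f j (\<lambda>x. 1 / (w - bb (complex_of_real (a j)) x))"
        unfolding d_def by (rule T_geo[OF L[OF j] B[OF j] Rj w(1) nw])
      moreover have "(\<lambda>x. 1 / (w - bb (complex_of_real (a j)) x)) = (\<lambda>x. geo (w - complex_of_real (a j)) 0 (bb 0 x))"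
        by (rule ext) (simp add: geo_eq algebra_simps)
      ultimately show ?thesis by (simp add: V_def)
    qed
    have "(\<lambda>n. \<Sum>j\<in>I. (1 / w^(Suc n)) * d j n) sums (\<Sum>j\<in>I. V (f j) (w - complex_of_real (a j)))"
      by (rule sums_sum) (rule each)
    moreover have "(\<lambda>n. \<Sum>j\<in>I. (1 / w^(Suc n)) * d j n) = (\<lambda>n. 0)"
      by (rule ext) (subst sum_distrib_left[symmetric], simp only: dsum mult_zero_right)
    ultimately show ?thesis by (metis sums_zero sums_unique2)
  qed
  obtain \<delta> where \<delta>: "\<delta> > 0" and \<delta>le: "\<And>j. j \<in> I \<Longrightarrow> j \<noteq> jN \<Longrightarrow> \<delta> \<le> a jN - a j"
  proof (cases "I - {jN} = {}")
    case True then show ?thesis using that[of 1] by auto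
  next
    case False
    define \<delta> where "\<delta> = Min ((\<lambda>j. a jN - a j) ` (I - {jN}))"
    have "\<delta> \<in> (\<lambda>j. a jN - a j) ` (I - {jN})" unfolding \<delta>_def using fin False by (intro Min_in) auto
    then obtain j0 where j0: "j0 \<in> I" "j0 \<noteq> jN" "\<delta> = a jN - a j0" by auto
    then have "\<delta> > 0" using lt[OF j0(1,2)] by simp
    moreover have "\<delta> \<le> a jN - a j" if "j \<in> I" "j \<noteq> jN" for j
      unfolding \<delta>_def using fin that by (intro Min_le) auto
    ultimately show ?thesis using that by blast
  qed
  define F where "F = V (f jN)"
  define G where "G w = - (\<Sum>j\<in>I-{jN}. V (f j) (w + complex_of_real (a jN - a j)))" for w
  have HF: "F holomorphic_on {w. Re w \<noteq> 0}" unfolding F_def by (rule V_holo[OF L[OF jN] B[OF jN]])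
  have HG: "G holomorphic_on {w. Re w > -\<delta>}"
  proof -
    have "(\<lambda>w. V (f j) (w + complex_of_real (a jN - a j))) holomorphic_on {w. Re w > -\<delta>}"
      if j: "j \<in> I - {jN}" for j
    proof -
      have "(V (f j) \<circ> (\<lambda>w. w + complex_of_real (a jN - a j))) holomorphic_on {w. Re w > -\<delta>}"
      proof (rule holomorphic_on_compose)
        show "(\<lambda>w. w + complex_of_real (a jN - a j)) holomorphic_on {w. Re w > -\<delta>}"
          by (intro holomorphic_intros)
        have "(\<lambda>w. w + complex_of_real (a jN - a j)) ` {w. Re w > -\<delta>} \<subseteq> {w. Re w \<noteq> 0}"
          using \<delta>le[of j] j by auto
        then show "V (f j) holomorphic_on (\<lambda>w. w + complex_of_real (a jN - a j)) ` {w. Re w > -\<delta>}"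
          using V_holo[OF L B, of j] j by (auto intro: holomorphic_on_subset)
      qed
      then show ?thesis by (simp add: o_def)
    qed
    then show ?thesis unfolding G_def by (intro holomorphic_intros) auto
  qed
  define R1 where "R1 = R0 + \<bar>a jN\<bar>"
  have EQ: "F w = G w" if w: "norm w > R1" "-\<delta> < Re w" "Re w \<noteq> 0" for w
  proof -
    define w' where "w' = w + complex_of_real (a jN)"
    have "norm w \<le> norm w' + \<bar>a jN\<bar>"
      using norm_triangle_ineq4[of w' "complex_of_real (a jN)"] by (simp add: w'_def)
    then have n': "norm w' > R0" using w(1) by (simp add: R1_def)
    have r': "Re w' \<noteq> a j" if "j \<in> I" for j
    proof (cases "j = jN")
      case True then show ?thesis using w(3) by (simp add: w'_def)
    next
      case False then show ?thesis using \<delta>le[OF that False] w(2) by (simp add: w'_def)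
    qed
    have "0 = (\<Sum>j\<in>I. V (f j) (w' - complex_of_real (a j)))" using Vrel[OF n' r'] by simp
    also have "\<dots> = V (f jN) (w' - complex_of_real (a jN)) + (\<Sum>j\<in>I-{jN}. V (f j) (w' - complex_of_real (a j)))"
      using fin jN by (simp add: sum.remove)
    also have "(\<Sum>j\<in>I-{jN}. V (f j) (w' - complex_of_real (a j))) = (\<Sum>j\<in>I-{jN}. V (f j) (w + complex_of_real (a jN - a j)))"
      by (simp add: w'_def algebra_simps)
    also have "w' - complex_of_real (a jN) = w" by (simp add: w'_def)
    finally show ?thesis unfolding F_def G_def by (simp add: eq_neg_iff_add_eq_0 add.commute)
  qed
  define M1 where "M1 = C * (\<Sum>k\<le>m. fact k / 1^(Suc k))"
  have BF: "norm (F w) \<le> M1" if w: "Re w < 0" "norm w \<ge> K + 1" for w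
    unfolding F_def M1_def
  proof (rule V_bound[OF B[OF jN]])
    show "Re w \<noteq> 0" using w by simp
    fix x :: real assume x: "x \<in> {-K..K}"
    have "norm w \<le> norm (w - bb 0 x) + norm (bb 0 x)" by (metis norm_triangle_sub add.commute)
    moreover have "norm (bb 0 x) \<le> K" using norm_bb_le[of 0 x] x by auto
    ultimately show "norm (w - bb 0 x) \<ge> 1" using w by simp
  qed simp
  define M2 where "M2 = (\<Sum>j\<in>I-{jN}. C * (\<Sum>k\<le>m. fact k / \<delta>^(Suc k)))"
  have BG: "norm (G w) \<le> M2" if w: "Re w \<ge> 0" for w
  proof -
    have "norm (G w) \<le> (\<Sum>j\<in>I-{jN}. norm (V (f j) (w + complex_of_real (a jN - a j))))"
      unfolding G_def norm_minus_cancel by (rule norm_sum)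
    also have "\<dots> \<le> M2" unfolding M2_def
    proof (rule sum_mono)
      fix j assume j: "j \<in> I - {jN}"
      have dl: "\<delta> \<le> a jN - a j" using \<delta>le j by auto
      have jI: "j \<in> I" using j by simp
      show "norm (V (f j) (w + complex_of_real (a jN - a j))) \<le> C * (\<Sum>k\<le>m. fact k / \<delta>^(Suc k))"
      proof (rule V_bound[OF B[OF jI] _ \<delta>])
        show "Re (w + complex_of_real (a jN - a j)) \<noteq> 0" using dl \<delta> w by simp
        fix x :: real
        have "\<delta> \<le> \<bar>Re (w + complex_of_real (a jN - a j) - bb 0 x)\<bar>" using dl w by simp
        also have "\<dots> \<le> norm (w + complex_of_real (a jN - a j) - bb 0 x)" by (rule abs_Re_le_cmod)
        finally show "\<delta> \<le> norm (w + complex_of_real (a jN - a j) - bb 0 x)" .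
      qed
    qed
    finally show ?thesis .
  qed
  have DEC: "\<exists>x::real. x > 0 \<and> norm (F (complex_of_real x)) < \<epsilon>" if e: "\<epsilon> > 0" for \<epsilon>
  proof -
    define S where "S = (\<Sum>k\<le>m. fact k :: real)"
    have S0: "S \<ge> 0" unfolding S_def by (intro sum_nonneg) auto
    define x where "x = (C * S + 1) / \<epsilon> + 1"
    have x1: "x \<ge> 1" using C0 S0 e by (simp add: x_def)
    have "norm (F (complex_of_real x)) \<le> C * (\<Sum>k\<le>m. fact k / x^(Suc k))"
      unfolding F_def
    proof (rule V_bound[OF B[OF jN]])
      show "Re (complex_of_real x) \<noteq> 0" "x > 0" using x1 by auto
      fix y :: real
      have "x \<le> \<bar>Re (complex_of_real x - bb 0 y)\<bar>" using x1 by simp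
      also have "\<dots> \<le> norm (complex_of_real x - bb 0 y)" by (rule abs_Re_le_cmod)
      finally show "x \<le> norm (complex_of_real x - bb 0 y)" .
    qed
    also have "\<dots> \<le> C * (\<Sum>k\<le>m. fact k / x)"
    proof (intro mult_left_mono sum_mono C0)
      fix k
      have "x \<le> x^(Suc k)" using x1 by (simp add: power_increasing[of 1 "Suc k" x, simplified])
      then show "fact k / x^(Suc k) \<le> fact k / x" using x1 by (intro divide_left_mono) auto
    qed
    also have "\<dots> = C * S / x" unfolding S_def sum_divide_distrib[symmetric] by simp
    also have "\<dots> < \<epsilon>"
    proof -
      have ee: "0 < \<epsilon> + \<epsilon> * \<epsilon>" using e by (simp add: add_pos_pos)
      have "C * S < \<epsilon> * x" using e C0 S0 ee by (simp add: x_def field_simps)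
      then show ?thesis using x1 by (simp add: field_simps)
    qed
    finally show ?thesis using x1 by (intro exI[of _ x]) auto
  qed
  have F0: "F (complex_of_real x) = 0" if "x > 0" for x :: real
    using glue[OF \<delta> HF HG EQ BF BG DEC that] by blast
  define e where "e n = f jN (\<lambda>x. (bb 0 x)^n)" for n
  have e0: "e n = 0" for n
  proof (rule powser_unique[of "1 / (K + 1)"])
    show "1 / (K + 1) > 0" using K0 by simp
    fix s :: real assume s: "0 < s" "s < 1 / (K + 1)"
    define w where "w = complex_of_real (1 / s)"
    have ws: "1 / s > K + 1" using s K0 by (simp add: field_simps)
    have Rw: "K < norm w" unfolding w_def norm_of_real using ws s by simp
    have nw: "bb 0 x \<noteq> w" for x using s by (auto simp: w_def complex_eq_iff)
    have R: "norm (bb 0 x) \<le> K" if "x \<in> {-K..K}" for x using norm_bb_le[of 0 x] that by auto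
    have "(\<lambda>n. (1 / w^(Suc n)) * e n) sums f jN (\<lambda>x. 1 / (w - bb 0 x))"
      unfolding e_def by (rule T_geo[OF L[OF jN] B[OF jN] R Rw nw])
    moreover have "f jN (\<lambda>x. 1 / (w - bb 0 x)) = 0"
    proof -
      have "f jN (\<lambda>x. 1 / (w - bb 0 x)) = F w" by (simp add: F_def V_def geo_eq)
      also have "\<dots> = 0" unfolding w_def by (rule F0) (use s in simp)
      finally show ?thesis .
    qed
    ultimately have "(\<lambda>n. (1 / w^(Suc n)) * e n) sums 0" by simp
    then have "(\<lambda>n. complex_of_real (1 / s) * ((1 / w^(Suc n)) * e n)) sums (complex_of_real (1 / s) * 0)"
      by (rule sums_mult)
    moreover have "complex_of_real (1 / s) * ((1 / w^(Suc n)) * e n) = e n * complex_of_real s ^ n" for n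
      using s by (simp add: w_def field_simps)
    ultimately show "(\<lambda>n. e n * complex_of_real s ^ n) sums 0" by simp
  qed
  have Z: "f jN (\<lambda>x. complex_of_real x ^ n) = 0" for n
  proof -
    have "(\<lambda>x. (bb 0 x)^n) = (\<lambda>x. (-\<i>)^n * complex_of_real x ^ n)"
      by (rule ext) (metis diff_0 mult_minus_left power_mult_distrib)
    then have "e n = (-\<i>)^n * f jN (\<lambda>x. complex_of_real x ^ n)"
      unfolding e_def using T_scale[OF L[OF jN] ofreal_pow_smooth] by simp
    then show ?thesis using e0[of n] by simp
  qed
  show ?thesis by (rule poly_kill[OF L[OF jN] B[OF jN] Z sm])
qed

lemma all_vanish:
  fixes f :: "nat \<Rightarrow> ((real \<Rightarrow> complex) \<Rightarrow> complex)" and a :: "nat \<Rightarrow> real"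
  shows "finite I \<Longrightarrow> (\<forall>j\<in>I. cs_distribution (f j)) \<Longrightarrow> inj_on a I \<Longrightarrow>
    (\<forall>t. (\<Sum>j\<in>I. fourier_dist (f j) t * complex_of_real (exp (a j * t))) = 0) \<Longrightarrow>
    \<forall>j\<in>I. zero_dist (f j)"
proof (induction "card I" arbitrary: I rule: less_induct)
  case less
  note fin = less.prems(1) and cs = less.prems(2) and inj = less.prems(3) and rel = less.prems(4)
  show ?case
  proof (cases "I = {}")
    case True then show ?thesis by simp
  next
    case False
    have "Max (a ` I) \<in> a ` I" using fin False by (intro Max_in) auto
    then obtain jN where jN: "jN \<in> I" "a jN = Max (a ` I)" by auto
    have lt: "a j < a jN" if "j \<in> I" "j \<noteq> jN" for j
    proof -
      have "a j \<le> a jN" using jN fin that by simp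
      moreover have "a j \<noteq> a jN" using inj that jN(1) by (auto dest: inj_onD)
      ultimately show ?thesis by simp
    qed
    have L: "lin (f j)" if "j \<in> I" for j using cs that cs_lin by blast
    obtain C K m where B: "\<forall>j\<in>I. bnd (f j) C K m"
      using bnd_common[OF fin, of f] cs cs_bnd by blast
    have ZN0: "f jN \<phi> = 0" if sm: "smooth \<phi>" for \<phi>
    proof (rule top_vanish[OF fin jN(1), where a=a and C=C and K=K and m=m and f=f])
      show "\<And>j. j \<in> I \<Longrightarrow> lin (f j)" by (rule L)
      show "\<And>j. j \<in> I \<Longrightarrow> bnd (f j) C K m" using B by blast
      show "\<And>j. j \<in> I \<Longrightarrow> j \<noteq> jN \<Longrightarrow> a j < a jN" by (rule lt)
      show "\<And>t. (\<Sum>j\<in>I. fourier_dist (f j) t * complex_of_real (exp (a j * t))) = 0" using rel by blast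
    qed (rule sm)
    have ZN: "zero_dist (f jN)" unfolding zero_dist_def using ZN0 by blast
    define I' where "I' = I - {jN}"
    have card: "card I' < card I" unfolding I'_def using fin jN(1) by (metis card_Diff1_less)
    have rel': "\<forall>t. (\<Sum>j\<in>I'. fourier_dist (f j) t * complex_of_real (exp (a j * t))) = 0"
    proof
      fix t
      have "fourier_dist (f jN) t = 0"
        using ZN fourier_smooth[of t] unfolding zero_dist_def fourier_dist_def by blast
      moreover have "(\<Sum>j\<in>I. fourier_dist (f j) t * complex_of_real (exp (a j * t))) =
          fourier_dist (f jN) t * complex_of_real (exp (a jN * t)) +
          (\<Sum>j\<in>I'. fourier_dist (f j) t * complex_of_real (exp (a j * t)))"
        unfolding I'_def using fin jN(1) by (simp add: sum.remove)
      ultimately show "(\<Sum>j\<in>I'. fourier_dist (f j) t * complex_of_real (exp (a j * t))) = 0"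
        using rel by simp
    qed
    have IH: "\<forall>j\<in>I'. zero_dist (f j)"
      using less.hyps[OF card] fin cs inj rel' unfolding I'_def
      by (meson Diff_subset finite_Diff inj_on_subset subsetD)
    show ?thesis using IH ZN unfolding I'_def by blast
  qed
qed


theorem lemma5p2:
  fixes N :: nat
    and f :: "nat \<Rightarrow> ((real \<Rightarrow> complex) \<Rightarrow> complex)"
    and a :: "nat \<Rightarrow> real"
  assumes "\<And>j. j \<in> {1..N} \<Longrightarrow> cs_distribution (f j)"
    and "inj_on a {1..N}"
    and "\<And>t. (\<Sum>j=1..N. fourier_dist (f j) t * complex_of_real (exp (a j * t))) = 0"
  shows "\<forall>j\<in>{1..N}. zero_dist (f j)"
  using all_vanish[of "{1..N}" f a] assms by blast

end
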